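(* Assume Assumption B and that the design is strongly stable with limit $p^\star$. Let $N_1=\sum_{i=1}^NK_i$, $N_0=N-N_1$, $$\widehat\sigma_0^2=\frac1{\max\{N_0,1\}}\sum_{i=1}^N(1-K_i)\big(Y_i-\widehat Y_{i-1}(0)\big)^2,\qquad \widehat\sigma_1^2=\frac1{\max\{N_1,1\}}\sum_{i=1}^NK_i\big(Y_i-\widehat Y_{i-1}(1)\big)^2,$$ $$\widehat V^{\mathrm{AIPW}}_{\mathrm{strong}}=\Big(\widehat\sigma_0\sqrt{\tfrac{p^\star}{1-p^\star}}+\widehat\sigma_1\sqrt{\tfrac{1-p^\star}{p^\star}}\Big)^2,$$ with $\widehat\sigma_\ell=\sqrt{\widehat\sigma_\ell^2}$. Then $\widehat\sigma_0^2\xrightarrow{p}\sigma_0^2$, $\widehat\sigma_1^2\xrightarrow{p}\sigma_1^2$; $\widehat V^{\mathrm{AIPW}}_{\mathrm{strong}}$ converges in probability to $\big(\sigma_0\sqrt{p^\star/(1-p^\star)}+\sigma_1\sqrt{(1-p^\star)/p^\star}\big)^2$, which is $\ge V^{\mathrm{AIPW}}_{\mathrm{strong}}:=\sigma_0^2\frac{p^\star}{1-p^\star}+\sigma_1^2\frac{1-p^\star}{p^\star}+2\sigma_{01}$ (conservative); and $\widehat V^{\mathrm{AIPW}}_{\mathrm{strong}}$ is consistent for $V^{\mathrm{AIPW}}_{\mathrm{strong}}$ when the potential outcomes satisfy generalized treatment effect homogeneity, i.e. $Y_i(1)-\bar Y_N(1)$ is proportional to $Y_i(0)-\bar Y_N(0)$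 for all $i$.
   Context: Setup. Let $(Y_i(0),Y_i(1))_{i\ge1}$ be a fixed (non-random) sequence of pairs of real numbers (potential outcomes under control and treatment). For each $N$ the experiment consists of units $1,\dots,N$. Random treatment indicators $K_1,K_2,\dots\in\{0,1\}$ are assigned sequentially and the observed outcome is $Y_i=K_iY_i(1)+(1-K_i)Y_i(0)$. Let $\mathcal F_0$ be the trivial $\sigma$-field and $\mathcal F_{i-1}=\sigma(K_1,Y_1,\dots,K_{i-1},Y_{i-1})$. A sequential design is a sequence of random variables $(p_i)_{i\ge1}$ (inclusion probabilities) such that $p_i$ is $\mathcal F_{i-1}$-measurable and $\mathbb P(K_i=1\mid\mathcal F_{i-1})=p_i$. $\bar Y_N(\ell)=\frac1N\sum_{i=1}^NY_i(\ell)$. Running estimates: $\widehat Y_0(0)=\widehat Y_0(1)=0$ and for $i\ge2$, $\widehat Y_{i-1}(0)=\frac1{i-1}\sum_{j=1}^{i-1}\frac{(1-K_j)Y_j}{1-p_j}$, $\widehat Y_{i-1}(1)=\frac1{i-1}\sum_{j=1}^{i-1}\frac{K_jY_j}{p_j}$. Strong design stability: there is a non-random $p^\star\in(0,1)$ with $p_i\xrightarrow{p}p^\star$ as $i\to\infty$. Assumption B: (a) there is $\delta\in(0,1)$ with $p_i\in[\delta,1-\delta]$ for all $i\ge1$; (b) there is $M>0$ with $|Y_i(\ell)|\le M$ for all $i\ge1$, $\ell\in\{0,1\}$; (c) for $\ell\in\{0,1\}$ the limits $\bar Y_\ell=\lim_N\bar Y_N(\ell)$, $\sigma_\ell^2=\lim_N\frac1N\sum_{i=1}^N(Y_i(\ell)-\bar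 Y_N(\ell))^2$ and $\sigma_{01}=\lim_N\frac1N\sum_{i=1}^N(Y_i(0)-\bar Y_N(0))(Y_i(1)-\bar Y_N(1))$ exist, with $\sigma_0^2,\sigma_1^2>0$; $\sigma_\ell=\sqrt{\sigma_\ell^2}$. *)

theory Defs
  imports "HOL-Probability.Probability"
begin

definition conv_in_prob :: "'a measure \<Rightarrow> (nat \<Rightarrow> 'a \<Rightarrow> real) \<Rightarrow> real \<Rightarrow> bool" where
  "conv_in_prob M X c \<longleftrightarrow>
     (\<forall>e>0. (\<lambda>n. measure M {\<omega> \<in> space M. \<bar>X n \<omega> - c\<bar> > e}) \<longlonglongrightarrow> 0)"

text \<open>Observed outcome Y_i = K_i Y_i(1) + (1 - K_i) Y_i(0); units are indexed from 1.\<close>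
definition Yobs :: "(nat \<Rightarrow> 'a \<Rightarrow> real) \<Rightarrow> (nat \<Rightarrow> real) \<Rightarrow> (nat \<Rightarrow> real) \<Rightarrow> nat \<Rightarrow> 'a \<Rightarrow> real" where
  "Yobs K Y0 Y1 i \<omega> = K i \<omega> * Y1 i + (1 - K i \<omega>) * Y0 i"

text \<open>The sigma-field F_{i-1} = sigma(K_1, Y_1, ..., K_{i-1}, Y_{i-1}) (trivial for i = 1).\<close>
definition past :: "'a measure \<Rightarrow> (nat \<Rightarrow> 'a \<Rightarrow> real) \<Rightarrow> (nat \<Rightarrow> real) \<Rightarrow> (nat \<Rightarrow> real) \<Rightarrow> nat \<Rightarrow> 'a measure" where
  "past M K Y0 Y1 i = sigma (space M)
     (\<Union>j\<in>{1..<i}. {K j -` B \<inter> space M | B. B \<in> sets borel}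
                 \<union> {Yobs K Y0 Y1 j -` B \<inter> space M | B. B \<in> sets borel})"

text \<open>Sequential design: p_i is F_{i-1}-measurable and P(K_i = 1 | F_{i-1}) = p_i
  (written via the defining property of conditional probability), for all i >= 1.\<close>
definition sequential_design :: "'a measure \<Rightarrow> (nat \<Rightarrow> 'a \<Rightarrow> real) \<Rightarrow> (nat \<Rightarrow> real) \<Rightarrow> (nat \<Rightarrow> real)
     \<Rightarrow> (nat \<Rightarrow> 'a \<Rightarrow> real) \<Rightarrow> bool" where
  "sequential_design M K Y0 Y1 p \<longleftrightarrow>
     (\<forall>i\<ge>1. K i \<in> borel_measurable M \<and> (\<forall>\<omega>\<in>space M. K i \<omega> \<in> {0, 1})
        \<and> p i \<in> borel_measurable (past M K Y0 Y1 i)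
        \<and> (\<forall>A \<in> sets (past M K Y0 Y1 i).
              measure M ({\<omega> \<in> space M. K i \<omega> = 1} \<inter> A)
                = (\<integral>\<omega>. indicator A \<omega> * p i \<omega> \<partial>M)))"

definition Yhat0 :: "(nat \<Rightarrow> 'a \<Rightarrow> real) \<Rightarrow> (nat \<Rightarrow> 'a \<Rightarrow> real) \<Rightarrow> (nat \<Rightarrow> real) \<Rightarrow> (nat \<Rightarrow> real)
     \<Rightarrow> nat \<Rightarrow> 'a \<Rightarrow> real" where
  "Yhat0 K p Y0 Y1 n \<omega> = (if n = 0 then 0 else
      (1 / real n) * (\<Sum>j=1..n. (1 - K j \<omega>) * Yobs K Y0 Y1 j \<omega> / (1 - p j \<omega>)))"

definition Yhat1 :: "(nat \<Rightarrow> 'a \<Rightarrow> real) \<Rightarrow> (nat \<Rightarrow> 'a \<Rightarrow> real) \<Rightarrow> (nat \<Rightarrow> real) \<Rightarrow> (nat \<Rightarrow> real)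
     \<Rightarrow> nat \<Rightarrow> 'a \<Rightarrow> real" where
  "Yhat1 K p Y0 Y1 n \<omega> = (if n = 0 then 0 else
      (1 / real n) * (\<Sum>j=1..n. K j \<omega> * Yobs K Y0 Y1 j \<omega> / p j \<omega>))"

definition N1 :: "(nat \<Rightarrow> 'a \<Rightarrow> real) \<Rightarrow> nat \<Rightarrow> 'a \<Rightarrow> real" where
  "N1 K N \<omega> = (\<Sum>i=1..N. K i \<omega>)"

definition N0 :: "(nat \<Rightarrow> 'a \<Rightarrow> real) \<Rightarrow> nat \<Rightarrow> 'a \<Rightarrow> real" where
  "N0 K N \<omega> = real N - N1 K N \<omega>"

definition sigma0_hat_sq :: "(nat \<Rightarrow> 'a \<Rightarrow> real) \<Rightarrow> (nat \<Rightarrow> 'a \<Rightarrow> real) \<Rightarrow> (nat \<Rightarrow> real) \<Rightarrow> (nat \<Rightarrow> real)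
     \<Rightarrow> nat \<Rightarrow> 'a \<Rightarrow> real" where
  "sigma0_hat_sq K p Y0 Y1 N \<omega> = (1 / max (N0 K N \<omega>) 1) *
     (\<Sum>i=1..N. (1 - K i \<omega>) * (Yobs K Y0 Y1 i \<omega> - Yhat0 K p Y0 Y1 (i - 1) \<omega>)\<^sup>2)"

definition sigma1_hat_sq :: "(nat \<Rightarrow> 'a \<Rightarrow> real) \<Rightarrow> (nat \<Rightarrow> 'a \<Rightarrow> real) \<Rightarrow> (nat \<Rightarrow> real) \<Rightarrow> (nat \<Rightarrow> real)
     \<Rightarrow> nat \<Rightarrow> 'a \<Rightarrow> real" where
  "sigma1_hat_sq K p Y0 Y1 N \<omega> = (1 / max (N1 K N \<omega>) 1) *
     (\<Sum>i=1..N. K i \<omega> * (Yobs K Y0 Y1 i \<omega> - Yhat1 K p Y0 Y1 (i - 1) \<omega>)\<^sup>2)"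

definition V_hat_strong :: "real \<Rightarrow> (nat \<Rightarrow> 'a \<Rightarrow> real) \<Rightarrow> (nat \<Rightarrow> 'a \<Rightarrow> real) \<Rightarrow> (nat \<Rightarrow> real) \<Rightarrow> (nat \<Rightarrow> real)
     \<Rightarrow> nat \<Rightarrow> 'a \<Rightarrow> real" where
  "V_hat_strong ps K p Y0 Y1 N \<omega> =
     (sqrt (sigma0_hat_sq K p Y0 Y1 N \<omega>) * sqrt (ps / (1 - ps))
      + sqrt (sigma1_hat_sq K p Y0 Y1 N \<omega>) * sqrt ((1 - ps) / ps))\<^sup>2"

definition Ybar :: "(nat \<Rightarrow> real) \<Rightarrow> nat \<Rightarrow> real" where
  "Ybar Y N = (1 / real N) * (\<Sum>i=1..N. Y i)"

definition Svar :: "(nat \<Rightarrow> real) \<Rightarrow> nat \<Rightarrow> real" where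
  "Svar Y N = (1 / real N) * (\<Sum>i=1..N. (Y i - Ybar Y N)\<^sup>2)"

definition Scov :: "(nat \<Rightarrow> real) \<Rightarrow> (nat \<Rightarrow> real) \<Rightarrow> nat \<Rightarrow> real" where
  "Scov Y0 Y1 N = (1 / real N) * (\<Sum>i=1..N. (Y0 i - Ybar Y0 N) * (Y1 i - Ybar Y1 N))"

end

theory Submission
  imports Defs
begin



lemma cip_L1:
  assumes P: "prob_space M"
    and Xm: "\<And>n. X n \<in> borel_measurable M"
    and Zi: "\<And>n. integrable M (Z n)"
    and bnd: "\<forall>\<^sub>F n in sequentially. \<forall>\<omega>\<in>space M. \<bar>X n \<omega> - c\<bar> \<le> Z n \<omega>"
    and lim: "(\<lambda>n. \<integral>\<omega>. Z n \<omega> \<partial>M) \<longlonglongrightarrow> 0"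
  shows "conv_in_prob M X c"
  unfolding conv_in_prob_def
proof (intro allI impI)
  fix e :: real assume e: "e > 0"
  interpret prob_space M by (rule P)
  have "(\<lambda>n. (\<integral>\<omega>. Z n \<omega> \<partial>M) / e) \<longlonglongrightarrow> 0 / e"
    by (intro tendsto_divide lim) (use e in auto)
  then have l2: "(\<lambda>n. (\<integral>\<omega>. Z n \<omega> \<partial>M) / e) \<longlonglongrightarrow> 0" by simp
  show "(\<lambda>n. measure M {\<omega> \<in> space M. e < \<bar>X n \<omega> - c\<bar>}) \<longlonglongrightarrow> 0"
  proof (rule tendsto_sandwich[OF _ _ tendsto_const l2])
    show "\<forall>\<^sub>F n in sequentially. 0 \<le> measure M {\<omega> \<in> space M. e < \<bar>X n \<omega> - c\<bar>}" by simp
    show "\<forall>\<^sub>F n in sequentially. measure M {\<omega> \<in> space M. e < \<bar>X n \<omega> - c\<bar>} \<le> (\<integral>\<omega>. Z n \<omega> \<partial>M) / e"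
      using bnd
    proof eventually_elim
      case (elim n)
      have "measure M {\<omega> \<in> space M. e < \<bar>X n \<omega> - c\<bar>} \<le> measure M {\<omega> \<in> space M. Z n \<omega> \<ge> e}"
        apply (rule finite_measure_mono)
        using elim apply force
        using Zi[of n] by (auto dest!: borel_measurable_integrable)
      also have "\<dots> \<le> (\<integral>\<omega>. Z n \<omega> \<partial>M) / e"
        apply (rule integral_Markov_inequality_measure[OF Zi sets.top])
        using elim e by (auto intro!: AE_I2)
      finally show ?case .
    qed
  qed
qed

lemma cip_cont2:
  assumes P: "prob_space M"
    and X: "conv_in_prob M X a" and Y: "conv_in_prob M Y b"
    and Xm: "\<And>n. X n \<in> borel_measurable M" and Ym: "\<And>n. Y n \<in> borel_measurable M"
    and g: "isCont (\<lambda>z. g (fst z) (snd z)) (a, b)"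
    and gm: "\<And>n. (\<lambda>\<omega>. g (X n \<omega>) (Y n \<omega>)) \<in> borel_measurable M"
  shows "conv_in_prob M (\<lambda>n \<omega>. g (X n \<omega>) (Y n \<omega>)) (g a b)"
  unfolding conv_in_prob_def
proof (intro allI impI)
  fix e :: real assume e: "e > 0"
  interpret prob_space M by (rule P)
  obtain d where d: "d > 0" and dd: "\<And>z. dist z (a,b) < d \<Longrightarrow> dist (g (fst z) (snd z)) (g a b) < e"
    using g e unfolding continuous_at_eps_delta by fastforce
  have sub: "{\<omega> \<in> space M. e < \<bar>g (X n \<omega>) (Y n \<omega>) - g a b\<bar>} \<subseteq>
      {\<omega> \<in> space M. d/3 < \<bar>X n \<omega> - a\<bar>} \<union> {\<omega> \<in> space M. d/3 < \<bar>Y n \<omega> - b\<bar>}" for n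
  proof
    fix \<omega> assume w: "\<omega> \<in> {\<omega> \<in> space M. e < \<bar>g (X n \<omega>) (Y n \<omega>) - g a b\<bar>}"
    show "\<omega> \<in> {\<omega> \<in> space M. d/3 < \<bar>X n \<omega> - a\<bar>} \<union> {\<omega> \<in> space M. d/3 < \<bar>Y n \<omega> - b\<bar>}"
    proof (rule ccontr)
      assume "\<not> ?thesis"
      then have h: "\<bar>X n \<omega> - a\<bar> \<le> d/3" "\<bar>Y n \<omega> - b\<bar> \<le> d/3" using w by auto
      have "dist (X n \<omega>, Y n \<omega>) (a,b) \<le> dist (X n \<omega>) a + dist (Y n \<omega>) b"
        unfolding dist_Pair_Pair by (rule sqrt_sum_squares_le_sum_abs[THEN order_trans]) auto
      also have "\<dots> < d" using h d by (simp add: dist_real_def)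
      finally have "dist (g (X n \<omega>) (Y n \<omega>)) (g a b) < e" using dd[of "(X n \<omega>, Y n \<omega>)"] by simp
      then show False using w by (simp add: dist_real_def)
    qed
  qed
  have "(\<lambda>n. measure M {\<omega> \<in> space M. d/3 < \<bar>X n \<omega> - a\<bar>} + measure M {\<omega> \<in> space M. d/3 < \<bar>Y n \<omega> - b\<bar>}) \<longlonglongrightarrow> 0 + 0"
  proof (intro tendsto_add)
    have "d/3 > 0" using d by simp
    then show "(\<lambda>n. measure M {\<omega> \<in> space M. d/3 < \<bar>X n \<omega> - a\<bar>}) \<longlonglongrightarrow> 0"
      "(\<lambda>n. measure M {\<omega> \<in> space M. d/3 < \<bar>Y n \<omega> - b\<bar>}) \<longlonglongrightarrow> 0"
      using X Y unfolding conv_in_prob_def by blast+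
  qed
  then have l: "(\<lambda>n. measure M {\<omega> \<in> space M. d/3 < \<bar>X n \<omega> - a\<bar>} + measure M {\<omega> \<in> space M. d/3 < \<bar>Y n \<omega> - b\<bar>}) \<longlonglongrightarrow> 0" by simp
  show "(\<lambda>n. measure M {\<omega> \<in> space M. e < \<bar>g (X n \<omega>) (Y n \<omega>) - g a b\<bar>}) \<longlonglongrightarrow> 0"
  proof (rule tendsto_sandwich[OF _ _ tendsto_const l])
    show "\<forall>\<^sub>F n in sequentially. 0 \<le> measure M {\<omega> \<in> space M. e < \<bar>g (X n \<omega>) (Y n \<omega>) - g a b\<bar>}" by simp
    show "\<forall>\<^sub>F n in sequentially. measure M {\<omega> \<in> space M. e < \<bar>g (X n \<omega>) (Y n \<omega>) - g a b\<bar>}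
       \<le> measure M {\<omega> \<in> space M. d/3 < \<bar>X n \<omega> - a\<bar>} + measure M {\<omega> \<in> space M. d/3 < \<bar>Y n \<omega> - b\<bar>}"
    proof (intro always_eventually allI)
      fix n
      have m1: "{\<omega> \<in> space M. d/3 < \<bar>X n \<omega> - a\<bar>} \<in> sets M" using Xm[of n] by measurable
      have m2: "{\<omega> \<in> space M. d/3 < \<bar>Y n \<omega> - b\<bar>} \<in> sets M" using Ym[of n] by measurable
      have "measure M {\<omega> \<in> space M. e < \<bar>g (X n \<omega>) (Y n \<omega>) - g a b\<bar>} \<le>
          measure M ({\<omega> \<in> space M. d/3 < \<bar>X n \<omega> - a\<bar>} \<union> {\<omega> \<in> space M. d/3 < \<bar>Y n \<omega> - b\<bar>})"
        by (rule finite_measure_mono[OF sub]) (use m1 m2 in auto)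
      also have "\<dots> \<le> measure M {\<omega> \<in> space M. d/3 < \<bar>X n \<omega> - a\<bar>} + measure M {\<omega> \<in> space M. d/3 < \<bar>Y n \<omega> - b\<bar>}"
        by (rule measure_Un_le[OF m1 m2])
      finally show "measure M {\<omega> \<in> space M. e < \<bar>g (X n \<omega>) (Y n \<omega>) - g a b\<bar>}
       \<le> measure M {\<omega> \<in> space M. d/3 < \<bar>X n \<omega> - a\<bar>} + measure M {\<omega> \<in> space M. d/3 < \<bar>Y n \<omega> - b\<bar>}" .
    qed
  qed
qed




lemma cesaro0:
  fixes a :: "nat \<Rightarrow> real"
  assumes "a \<longlonglongrightarrow> 0"
  shows "(\<lambda>N. (1 / real N) * (\<Sum>i=1..N. a i)) \<longlonglongrightarrow> 0"
proof (rule LIMSEQ_I)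
  fix r :: real assume r: "r > 0"
  obtain N0 where N0: "\<And>n. n \<ge> N0 \<Longrightarrow> \<bar>a n\<bar> < r/2"
    using LIMSEQ_D[OF assms, of "r/2"] r by auto
  define C where "C = (\<Sum>i=1..N0. \<bar>a i\<bar>)"
  have C0: "C \<ge> 0" unfolding C_def by (simp add: sum_nonneg)
  obtain N1 :: nat where N1: "real N1 > 2 * C / r" using reals_Archimedean2 by blast
  show "\<exists>no. \<forall>n\<ge>no. norm ((1 / real n) * (\<Sum>i=1..n. a i) - 0) < r"
  proof (intro exI allI impI)
    fix n assume n: "n \<ge> max (Suc N0) N1"
    then have npos: "real n > 0" by simp
    have split: "{1..n} = {1..N0} \<union> {Suc N0..n}" using n by auto
    have "\<bar>\<Sum>i=1..n. a i\<bar> \<le> (\<Sum>i=1..n. \<bar>a i\<bar>)" by (rule sum_abs)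
    also have "\<dots> = C + (\<Sum>i=Suc N0..n. \<bar>a i\<bar>)" unfolding C_def split
      by (rule sum.union_disjoint) auto
    also have "(\<Sum>i=Suc N0..n. \<bar>a i\<bar>) \<le> (\<Sum>i=Suc N0..n. r/2)"
    proof (rule sum_mono)
      fix i assume "i \<in> {Suc N0..n}"
      then have "N0 \<le> i" by simp
      from N0[OF this] show "\<bar>a i\<bar> \<le> r/2" by simp
    qed
    also have "\<dots> \<le> real n * (r/2)" using r by (simp add: mult_right_mono)
    finally have b: "\<bar>\<Sum>i=1..n. a i\<bar> \<le> C + real n * (r/2)" by simp
    have "real N1 \<le> real n" using n by simp
    then have "2 * C / r < real n" using N1 by linarith
    then have "2 * C < real n * r" using r by (simp add: divide_less_eq)
    then have "C < real n * r / 2" by simp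
    then have "\<bar>\<Sum>i=1..n. a i\<bar> < real n * r" using b by simp
    then have lt: "\<bar>\<Sum>i=1..n. a i\<bar> / real n < r" using npos by (simp add: divide_less_eq mult.commute)
    have "norm ((1 / real n) * (\<Sum>i=1..n. a i) - 0) = \<bar>\<Sum>i=1..n. a i\<bar> / real n"
      by (simp add: abs_mult)
    then show "norm ((1 / real n) * (\<Sum>i=1..n. a i) - 0) < r" using lt by simp
  qed
qed

lemma cesaro_shift:
  fixes a :: "nat \<Rightarrow> real"
  assumes "a \<longlonglongrightarrow> 0"
  shows "(\<lambda>N. (1 / real N) * (\<Sum>i=1..N. a (i - 1))) \<longlonglongrightarrow> 0"
proof -
  have "(\<lambda>i. a (i - 1)) \<longlonglongrightarrow> 0"
    by (rule LIMSEQ_imp_Suc) (use assms in simp)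
  then show ?thesis by (rule cesaro0)
qed

lemma cip_L1_conv:
  assumes P: "prob_space M" and X: "conv_in_prob M X c"
    and Xm: "\<And>n. X n \<in> borel_measurable M"
    and B: "\<And>n \<omega>. \<omega> \<in> space M \<Longrightarrow> \<bar>X n \<omega> - c\<bar> \<le> B"
  shows "(\<lambda>n. \<integral>\<omega>. \<bar>X n \<omega> - c\<bar> \<partial>M) \<longlonglongrightarrow> 0"
proof (rule LIMSEQ_I)
  interpret prob_space M by (rule P)
  fix r :: real assume r: "r > 0"
  obtain x0 where x0: "x0 \<in> space M" using not_empty by blast
  have B0: "B \<ge> 0" using B[OF x0, of 0] by linarith
  have "r/2 > 0" using r by simp
  then have "(\<lambda>n. measure M {\<omega> \<in> space M. r/2 < \<bar>X n \<omega> - c\<bar>}) \<longlonglongrightarrow> 0"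
    using X unfolding conv_in_prob_def by blast
  moreover have "r / (2 * (B + 1)) > 0" using r B0 by simp
  ultimately obtain N0 where N0': "\<forall>n\<ge>N0. norm (measure M {\<omega> \<in> space M. r/2 < \<bar>X n \<omega> - c\<bar>} - 0) < r / (2 * (B + 1))"
    using LIMSEQ_D by blast
  then have N0: "\<And>n. n \<ge> N0 \<Longrightarrow> measure M {\<omega> \<in> space M. r/2 < \<bar>X n \<omega> - c\<bar>} < r / (2 * (B + 1))"
    by simp
  show "\<exists>no. \<forall>n\<ge>no. norm ((\<integral>\<omega>. \<bar>X n \<omega> - c\<bar> \<partial>M) - 0) < r"
  proof (intro exI allI impI)
    fix n assume n: "n \<ge> N0"
    let ?A = "{\<omega> \<in> space M. r/2 < \<bar>X n \<omega> - c\<bar>}"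
    have Am: "?A \<in> sets M" using Xm[of n] by measurable
    have int1: "integrable M (\<lambda>\<omega>. \<bar>X n \<omega> - c\<bar>)"
      by (rule integrable_const_bound[where B=B]) (use B Xm[of n] in auto)
    have "(\<integral>\<omega>. \<bar>X n \<omega> - c\<bar> \<partial>M) \<le> (\<integral>\<omega>. r/2 + B * indicator ?A \<omega> \<partial>M)"
    proof (rule integral_mono[OF int1])
      show "integrable M (\<lambda>\<omega>. r/2 + B * indicator ?A \<omega>)"
        using Am by (intro Bochner_Integration.integrable_add integrable_mult_right integrable_real_indicator) (auto simp: emeasure_eq_measure)
      fix \<omega> assume w: "\<omega> \<in> space M"
      show "\<bar>X n \<omega> - c\<bar> \<le> r/2 + B * indicator ?A \<omega>"
        using B[OF w, of n] w B0 r by (cases "\<omega> \<in> ?A") auto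
    qed
    also have "\<dots> = (\<integral>\<omega>. r/2 \<partial>M) + (\<integral>\<omega>. B * indicator ?A \<omega> \<partial>M)"
      by (rule Bochner_Integration.integral_add)
        (use Am in \<open>auto simp: emeasure_eq_measure intro!: integrable_mult_right integrable_real_indicator\<close>)
    also have "\<dots> = r/2 + B * measure M ?A" using Am by (simp add: prob_space emeasure_eq_measure)
    also have "\<dots> < r/2 + r/2"
    proof -
      have "B * measure M ?A \<le> B * (r / (2 * (B + 1)))"
        using N0[OF n] B0 by (intro mult_left_mono) auto
      also have "\<dots> < r/2" using B0 r by (simp add: field_simps)
      finally show ?thesis by simp
    qed
    finally show "norm ((\<integral>\<omega>. \<bar>X n \<omega> - c\<bar> \<partial>M) - 0) < r" by simp
  qed
qed




lemma bnd_int: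
  fixes f :: "'a \<Rightarrow> real"
  assumes "finite_measure M" "f \<in> borel_measurable M" "\<And>x. x \<in> space M \<Longrightarrow> \<bar>f x\<bar> \<le> B"
  shows "integrable M f"
proof -
  interpret finite_measure M by (rule assms(1))
  show ?thesis
  proof (rule integrable_const_bound[where B=B])
    show "AE x in M. norm (f x) \<le> B" by (rule AE_I2) (use assms(3) in simp)
  qed (rule assms(2))
qed

lemma past_space[simp]: "space (past M K Y0 Y1 i) = space M"
  unfolding past_def by (rule space_measure_of) auto

lemma past_sets: "sets (past M K Y0 Y1 i) = sigma_sets (space M)
     (\<Union>j\<in>{1..<i}. {K j -` B \<inter> space M | B. B \<in> sets borel}
                 \<union> {Yobs K Y0 Y1 j -` B \<inter> space M | B. B \<in> sets borel})"
  unfolding past_def by (rule sets_measure_of) auto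

lemma design_K:
  assumes "sequential_design M K Y0 Y1 p" "i \<ge> 1"
  shows "K i \<in> borel_measurable M" "\<And>\<omega>. \<omega> \<in> space M \<Longrightarrow> K i \<omega> = 0 \<or> K i \<omega> = 1"
  using assms unfolding sequential_design_def by auto

lemma Yobs_meas:
  assumes "sequential_design M K Y0 Y1 p" "i \<ge> 1"
  shows "Yobs K Y0 Y1 i \<in> borel_measurable M"
  using design_K(1)[OF assms] unfolding Yobs_def[abs_def] by measurable

lemma past_subalg:
  assumes "sequential_design M K Y0 Y1 p"
  shows "subalgebra M (past M K Y0 Y1 i)"
  unfolding subalgebra_def
proof (intro conjI)
  show "space (past M K Y0 Y1 i) = space M" by simp
  show "sets (past M K Y0 Y1 i) \<subseteq> sets M" unfolding past_sets
  proof (rule sets.sigma_sets_subset)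
    show "(\<Union>j\<in>{1..<i}. {K j -` B \<inter> space M | B. B \<in> sets borel}
                 \<union> {Yobs K Y0 Y1 j -` B \<inter> space M | B. B \<in> sets borel}) \<subseteq> sets M"
    proof (safe)
      fix j B assume "j \<in> {1..<i}" "B \<in> sets (borel :: real measure)"
      then show "K j -` B \<inter> space M \<in> sets M" "Yobs K Y0 Y1 j -` B \<inter> space M \<in> sets M"
        using design_K(1)[OF assms, of j] Yobs_meas[OF assms, of j] by (auto simp: measurable_sets)
    qed
  qed
qed

lemma past_mono:
  assumes "j \<le> i"
  shows "subalgebra (past M K Y0 Y1 i) (past M K Y0 Y1 j)"
  unfolding subalgebra_def past_sets
proof (intro conjI)
  show "space (past M K Y0 Y1 j) = space (past M K Y0 Y1 i)" by simp
  show "sigma_sets (space M) (\<Union>j\<in>{1..<j}. {K j -` B \<inter> space M | B. B \<in> sets borel}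
                 \<union> {Yobs K Y0 Y1 j -` B \<inter> space M | B. B \<in> sets borel}) \<subseteq>
    sigma_sets (space M) (\<Union>j\<in>{1..<i}. {K j -` B \<inter> space M | B. B \<in> sets borel}
                 \<union> {Yobs K Y0 Y1 j -` B \<inter> space M | B. B \<in> sets borel})"
    by (rule sigma_sets_mono', rule UN_mono) (use assms in auto)
qed

lemma past_meas_mono:
  assumes "j \<le> i" "f \<in> borel_measurable (past M K Y0 Y1 j)"
  shows "f \<in> borel_measurable (past M K Y0 Y1 i)"
  by (rule measurable_from_subalg[OF past_mono[OF assms(1)] assms(2)])

lemma past_K:
  assumes "1 \<le> j" "j < i"
  shows "K j \<in> borel_measurable (past M K Y0 Y1 i)" "Yobs K Y0 Y1 j \<in> borel_measurable (past M K Y0 Y1 i)"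
proof -
  have "K j -` B \<inter> space M \<in> sets (past M K Y0 Y1 i)" if "B \<in> sets borel" for B
    unfolding past_sets
    by (rule sigma_sets.Basic, rule UN_I[where a=j]) (use assms that in \<open>simp, blast\<close>)
  then show "K j \<in> borel_measurable (past M K Y0 Y1 i)" by (intro measurableI) auto
  have "Yobs K Y0 Y1 j -` B \<inter> space M \<in> sets (past M K Y0 Y1 i)" if "B \<in> sets borel" for B
    unfolding past_sets
    by (rule sigma_sets.Basic, rule UN_I[where a=j]) (use assms that in \<open>simp, blast\<close>)
  then show "Yobs K Y0 Y1 j \<in> borel_measurable (past M K Y0 Y1 i)" by (intro measurableI) auto
qed

lemma design_p:
  assumes "sequential_design M K Y0 Y1 p" "i \<ge> 1"
  shows "p i \<in> borel_measurable (past M K Y0 Y1 i)" "p i \<in> borel_measurable M"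
  using assms unfolding sequential_design_def apply auto[1]
  using assms unfolding sequential_design_def
  by (meson measurable_from_subalg past_subalg assms(1))

lemma orth:
  assumes P: "prob_space M" and D: "sequential_design M K Y0 Y1 p" and i: "i \<ge> 1"
    and hm: "h \<in> borel_measurable (past M K Y0 Y1 i)"
    and hb: "\<And>\<omega>. \<omega> \<in> space M \<Longrightarrow> \<bar>h \<omega>\<bar> \<le> B"
    and pb: "\<And>\<omega>. \<omega> \<in> space M \<Longrightarrow> 0 \<le> p i \<omega> \<and> p i \<omega> \<le> 1"
  shows "(\<integral>\<omega>. (K i \<omega> - p i \<omega>) * h \<omega> \<partial>M) = 0"
proof -
  interpret prob_space M by (rule P)
  let ?F = "past M K Y0 Y1 i"
  have sub: "subalgebra M ?F" by (rule past_subalg[OF D])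
  interpret sigma_finite_subalgebra M ?F
    by (rule finite_measure_subalgebra_is_sigma_finite)
       (simp add: finite_measure_subalgebra_def finite_measure_subalgebra_axioms_def sub finite_measure_axioms)
  have Km: "K i \<in> borel_measurable M" using design_K[OF D i] by simp
  have K01: "\<And>\<omega>. \<omega> \<in> space M \<Longrightarrow> K i \<omega> = 0 \<or> K i \<omega> = 1" using design_K[OF D i] by simp
  have pmF: "p i \<in> borel_measurable ?F" and pm: "p i \<in> borel_measurable M" using design_p[OF D i] by auto
  have hM: "h \<in> borel_measurable M" by (rule measurable_from_subalg[OF sub hm])
  have Ki: "integrable M (K i)"
  proof (rule integrable_const_bound[where B=1])
    show "AE x in M. norm (K i x) \<le> 1"
    proof (rule AE_I2)
      fix x assume "x \<in> space M" then show "norm (K i x) \<le> 1" using K01[of x] by auto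
    qed
  qed (rule Km)
  have pi: "integrable M (p i)"
    by (rule integrable_const_bound[where B=1]) (use pb pm in auto)
  have ae: "AE x in M. real_cond_exp M ?F (K i) x = p i x"
  proof (rule real_cond_exp_charact[OF _ Ki pi pmF])
    fix A assume A: "A \<in> sets ?F"
    then have AM: "A \<in> sets M" using sub unfolding subalgebra_def by auto
    have KA: "{\<omega> \<in> space M. K i \<omega> = 1} \<inter> A \<in> sets M" using AM Km by measurable
    have "(\<integral>x\<in>A. K i x \<partial>M) = (\<integral>x. indicator ({\<omega> \<in> space M. K i \<omega> = 1} \<inter> A) x \<partial>M)"
      unfolding set_lebesgue_integral_def
    proof (rule Bochner_Integration.integral_cong[OF refl])
      fix x assume "x \<in> space M"
      then show "indicator A x *\<^sub>R K i x = indicator ({\<omega> \<in> space M. K i \<omega> = 1} \<inter> A) x"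
        using K01[of x] by (auto simp: indicator_def)
    qed
    also have "\<dots> = measure M ({\<omega> \<in> space M. K i \<omega> = 1} \<inter> A)"
      using KA by simp
    also have "\<dots> = (\<integral>\<omega>. indicator A \<omega> * p i \<omega> \<partial>M)"
      using D i A unfolding sequential_design_def by auto
    also have "\<dots> = (\<integral>x\<in>A. p i x \<partial>M)"
      unfolding set_lebesgue_integral_def by simp
    finally show "(\<integral>x\<in>A. K i x \<partial>M) = (\<integral>x\<in>A. p i x \<partial>M)" .
  qed
  have hK: "integrable M (\<lambda>x. h x * K i x)"
  proof (rule bnd_int[where B=B])
    fix x assume x: "x \<in> space M"
    show "\<bar>h x * K i x\<bar> \<le> B" using hb[OF x] K01[OF x] by auto
  qed (use Km hM finite_measure_axioms in auto)
  have hp: "integrable M (\<lambda>x. h x * p i x)"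
  proof (rule bnd_int[where B=B])
    fix x assume x: "x \<in> space M"
    have "\<bar>h x * p i x\<bar> = \<bar>h x\<bar> * p i x" using pb[OF x] by (simp add: abs_mult)
    also have "\<dots> \<le> \<bar>h x\<bar> * 1" using pb[OF x] by (intro mult_left_mono) auto
    finally show "\<bar>h x * p i x\<bar> \<le> B" using hb[OF x] by simp
  qed (use pm hM finite_measure_axioms in auto)
  have "(\<integral>x. h x * K i x \<partial>M) = (\<integral>x. h x * real_cond_exp M ?F (K i) x \<partial>M)"
    using real_cond_exp_intg(2)[OF hK hm Km] by simp
  also have "\<dots> = (\<integral>x. h x * p i x \<partial>M)"
    by (rule integral_cong_AE) (use ae hM pm in auto)
  finally have eq: "(\<integral>x. h x * K i x \<partial>M) = (\<integral>x. h x * p i x \<partial>M)" .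
  have "(\<integral>\<omega>. (K i \<omega> - p i \<omega>) * h \<omega> \<partial>M) = (\<integral>x. h x * K i x - h x * p i x \<partial>M)"
    by (simp add: algebra_simps)
  also have "\<dots> = (\<integral>x. h x * K i x \<partial>M) - (\<integral>x. h x * p i x \<partial>M)"
    by (rule Bochner_Integration.integral_diff[OF hK hp])
  finally show ?thesis using eq by simp
qed




lemma S_meas:
  assumes D: "sequential_design M K Y0 Y1 p"
    and am: "\<And>i. i \<ge> 1 \<Longrightarrow> a i \<in> borel_measurable (past M K Y0 Y1 i)"
    and "n < m"
  shows "(\<lambda>\<omega>. \<Sum>i=1..n. (K i \<omega> - p i \<omega>) * a i \<omega>) \<in> borel_measurable (past M K Y0 Y1 m)"
proof (rule borel_measurable_sum)
  fix i assume i: "i \<in> {1..n}"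
  then have "1 \<le> i" "i < m" "i \<le> m" using assms by auto
  then have "K i \<in> borel_measurable (past M K Y0 Y1 m)"
     "p i \<in> borel_measurable (past M K Y0 Y1 m)" "a i \<in> borel_measurable (past M K Y0 Y1 m)"
    using past_K(1) past_meas_mono design_p(1)[OF D] am by blast+
  then show "(\<lambda>\<omega>. (K i \<omega> - p i \<omega>) * a i \<omega>) \<in> borel_measurable (past M K Y0 Y1 m)" by measurable
qed

lemma mg_L2:
  assumes P: "prob_space M" and D: "sequential_design M K Y0 Y1 p"
    and pb: "\<And>i \<omega>. i \<ge> 1 \<Longrightarrow> \<omega> \<in> space M \<Longrightarrow> 0 \<le> p i \<omega> \<and> p i \<omega> \<le> 1"
    and am: "\<And>i. i \<ge> 1 \<Longrightarrow> a i \<in> borel_measurable (past M K Y0 Y1 i)"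
    and ab: "\<And>i \<omega>. i \<ge> 1 \<Longrightarrow> \<omega> \<in> space M \<Longrightarrow> \<bar>a i \<omega>\<bar> \<le> C"
  shows "(\<integral>\<omega>. (\<Sum>i=1..n. (K i \<omega> - p i \<omega>) * a i \<omega>)\<^sup>2 \<partial>M) \<le> real n * C\<^sup>2"
proof -
  interpret prob_space M by (rule P)
  define S where "S n \<omega> = (\<Sum>i=1..n. (K i \<omega> - p i \<omega>) * a i \<omega>)" for n \<omega>
  have dif: "\<bar>K i \<omega> - p i \<omega>\<bar> \<le> 1" if "i \<ge> 1" "\<omega> \<in> space M" for i \<omega>
    using design_K(2)[OF D that(1) that(2)] pb[OF that] by auto
  have term_b: "\<bar>(K i \<omega> - p i \<omega>) * a i \<omega>\<bar> \<le> C" if "i \<ge> 1" "\<omega> \<in> space M" for i \<omega>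
  proof -
    have "\<bar>(K i \<omega> - p i \<omega>) * a i \<omega>\<bar> = \<bar>K i \<omega> - p i \<omega>\<bar> * \<bar>a i \<omega>\<bar>" by (simp add: abs_mult)
    also have "\<dots> \<le> 1 * C" by (rule mult_mono) (use dif[OF that] ab[OF that] in auto)
    finally show ?thesis by simp
  qed
  have Sb: "\<bar>S n \<omega>\<bar> \<le> real n * C" if "\<omega> \<in> space M" for n \<omega>
  proof -
    have "\<bar>S n \<omega>\<bar> \<le> (\<Sum>i=1..n. \<bar>(K i \<omega> - p i \<omega>) * a i \<omega>\<bar>)" unfolding S_def by (rule sum_abs)
    also have "\<dots> \<le> (\<Sum>i=1..n. C)" by (rule sum_mono) (use term_b that in auto)
    finally show ?thesis by simp
  qed
  have aM: "a i \<in> borel_measurable M" if "i \<ge> 1" for i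
    using measurable_from_subalg[OF past_subalg[OF D] am[OF that]] .
  have SmF: "S n \<in> borel_measurable (past M K Y0 Y1 (Suc n))" for n
    unfolding S_def[abs_def] by (rule S_meas[OF D am]) auto
  have SM: "S n \<in> borel_measurable M" for n
    using measurable_from_subalg[OF past_subalg[OF D] SmF] .
  have int2: "integrable M (\<lambda>\<omega>. (S n \<omega>)\<^sup>2)" for n
  proof (rule integrable_const_bound[where B="(real n * C)\<^sup>2"])
    show "AE x in M. norm ((S n x)\<^sup>2) \<le> (real n * C)\<^sup>2"
      using Sb by (auto intro!: AE_I2 simp: abs_le_square_iff[symmetric] power_abs)
         (metis abs_ge_zero abs_of_nonneg order_trans)
  qed (use SM in measurable)
  show ?thesis
  proof (induction n)
    case 0 then show ?case by simp
  next
    case (Suc n)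
    let ?d = "\<lambda>\<omega>. (K (Suc n) \<omega> - p (Suc n) \<omega>) * a (Suc n) \<omega>"
    have KM: "K (Suc n) \<in> borel_measurable M" using design_K(1)[OF D] by simp
    have pM: "p (Suc n) \<in> borel_measurable M" using design_p(2)[OF D] by simp
    have aM': "a (Suc n) \<in> borel_measurable M" using aM by simp
    have split: "S (Suc n) \<omega> = S n \<omega> + ?d \<omega>" for \<omega> unfolding S_def by simp
    have sq: "(S (Suc n) \<omega>)\<^sup>2 = (S n \<omega>)\<^sup>2 + 2 * ((K (Suc n) \<omega> - p (Suc n) \<omega>) * (a (Suc n) \<omega> * S n \<omega>)) + (?d \<omega>)\<^sup>2" for \<omega>
      unfolding split by (simp add: power2_eq_square algebra_simps)
    have i1: "integrable M (\<lambda>\<omega>. (K (Suc n) \<omega> - p (Suc n) \<omega>) * (a (Suc n) \<omega> * S n \<omega>))"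
    proof (rule integrable_const_bound[where B="C * (real n * C)"])
      show "AE x in M. norm ((K (Suc n) x - p (Suc n) x) * (a (Suc n) x * S n x)) \<le> C * (real n * C)"
      proof (rule AE_I2)
        fix x assume x: "x \<in> space M"
        have "\<bar>(K (Suc n) x - p (Suc n) x) * (a (Suc n) x * S n x)\<bar> = \<bar>?d x\<bar> * \<bar>S n x\<bar>" by (simp add: abs_mult)
        also have "\<dots> \<le> C * (real n * C)" using term_b[of "Suc n" x] Sb[OF x, of n] x
          by (intro mult_mono) auto
        finally show "norm ((K (Suc n) x - p (Suc n) x) * (a (Suc n) x * S n x)) \<le> C * (real n * C)" by simp
      qed
    qed (use KM pM aM' SM in measurable)
    have i2: "integrable M (\<lambda>\<omega>. (?d \<omega>)\<^sup>2)"
    proof (rule integrable_const_bound[where B="C\<^sup>2"])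
      show "AE x in M. norm ((?d x)\<^sup>2) \<le> C\<^sup>2"
      proof (rule AE_I2)
        fix x assume x: "x \<in> space M"
        have "\<bar>?d x\<bar> \<le> C" using term_b[of "Suc n" x] x by simp
        then show "norm ((?d x)\<^sup>2) \<le> C\<^sup>2"
          by (simp add: abs_le_square_iff[symmetric] power_abs)
      qed
    qed (use KM pM aM' in measurable)
    have hm: "(\<lambda>\<omega>. a (Suc n) \<omega> * S n \<omega>) \<in> borel_measurable (past M K Y0 Y1 (Suc n))"
      using am[of "Suc n"] SmF[of n] by measurable
    have o: "(\<integral>\<omega>. (K (Suc n) \<omega> - p (Suc n) \<omega>) * (a (Suc n) \<omega> * S n \<omega>) \<partial>M) = 0"
    proof (rule orth[OF P D _ hm])
      show "\<And>\<omega>. \<omega> \<in> space M \<Longrightarrow> \<bar>a (Suc n) \<omega> * S n \<omega>\<bar> \<le> C * (real n * C)"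
      proof -
        fix \<omega> assume w: "\<omega> \<in> space M"
        have "\<bar>a (Suc n) \<omega> * S n \<omega>\<bar> = \<bar>a (Suc n) \<omega>\<bar> * \<bar>S n \<omega>\<bar>" by (simp add: abs_mult)
        also have "\<dots> \<le> C * (real n * C)"
          by (rule mult_mono) (use ab[of "Suc n" \<omega>] Sb[OF w, of n] w in auto)
        finally show "\<bar>a (Suc n) \<omega> * S n \<omega>\<bar> \<le> C * (real n * C)" .
      qed
      show "\<And>\<omega>. \<omega> \<in> space M \<Longrightarrow> 0 \<le> p (Suc n) \<omega> \<and> p (Suc n) \<omega> \<le> 1" using pb by simp
    qed simp
    have "(\<integral>\<omega>. (S (Suc n) \<omega>)\<^sup>2 \<partial>M) = (\<integral>\<omega>. (S n \<omega>)\<^sup>2 \<partial>M) + 2 * 0 + (\<integral>\<omega>. (?d \<omega>)\<^sup>2 \<partial>M)"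
      unfolding sq o[symmetric] using int2 i1 i2 by simp
    also have "(\<integral>\<omega>. (?d \<omega>)\<^sup>2 \<partial>M) \<le> (\<integral>\<omega>. C\<^sup>2 \<partial>M)"
    proof (rule integral_mono[OF i2])
      fix x assume x: "x \<in> space M"
      have "\<bar>?d x\<bar> \<le> C" using term_b[of "Suc n" x] x by simp
      then show "(?d x)\<^sup>2 \<le> C\<^sup>2"
        by (simp add: abs_le_square_iff[symmetric] power_abs)
    qed simp
    also have "(\<integral>\<omega>. C\<^sup>2 \<partial>M) = C\<^sup>2" by (simp add: prob_space)
    finally show ?case using Suc.IH unfolding S_def by (simp add: algebra_simps)
  qed
qed




lemma abs_le_sq_bound: "\<bar>x::real\<bar> \<le> e + x\<^sup>2 / e" if "e > 0" for e
proof (cases "\<bar>x\<bar> \<le> e")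
  case True then show ?thesis using that by (simp add: add_increasing2)
next
  case False
  then have "\<bar>x\<bar> * e \<le> \<bar>x\<bar> * \<bar>x\<bar>" using that by (intro mult_left_mono) auto
  then have "\<bar>x\<bar> \<le> x\<^sup>2 / e" using that by (simp add: field_simps power2_eq_square)
  then show ?thesis using that by simp
qed

lemma mg_L1:
  assumes P: "prob_space M" and D: "sequential_design M K Y0 Y1 p"
    and pb: "\<And>i \<omega>. i \<ge> 1 \<Longrightarrow> \<omega> \<in> space M \<Longrightarrow> 0 \<le> p i \<omega> \<and> p i \<omega> \<le> 1"
    and am: "\<And>i. i \<ge> 1 \<Longrightarrow> a i \<in> borel_measurable (past M K Y0 Y1 i)"
    and ab: "\<And>i \<omega>. i \<ge> 1 \<Longrightarrow> \<omega> \<in> space M \<Longrightarrow> \<bar>a i \<omega>\<bar> \<le> C"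
  shows "(\<lambda>n. \<integral>\<omega>. \<bar>(1 / real n) * (\<Sum>i=1..n. (K i \<omega> - p i \<omega>) * a i \<omega>)\<bar> \<partial>M) \<longlonglongrightarrow> 0"
proof (rule LIMSEQ_I)
  interpret prob_space M by (rule P)
  fix r :: real assume r: "r > 0"
  define e where "e = r / 2"
  have e: "e > 0" using r e_def by simp
  define S where "S n \<omega> = (\<Sum>i=1..n. (K i \<omega> - p i \<omega>) * a i \<omega>)" for n \<omega>
  have SM: "S n \<in> borel_measurable M" for n
    using measurable_from_subalg[OF past_subalg[OF D] S_meas[OF D am, of n "Suc n"]]
    unfolding S_def by simp
  have C0: "C \<ge> 0" using ab[of 1 "SOME x. x \<in> space M"] not_empty
    by (metis abs_ge_zero order_trans some_in_eq order_refl)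
  have dif: "\<bar>K i \<omega> - p i \<omega>\<bar> \<le> 1" if "i \<ge> 1" "\<omega> \<in> space M" for i \<omega>
    using design_K(2)[OF D that(1) that(2)] pb[OF that] by auto
  have term_b: "\<bar>(K i \<omega> - p i \<omega>) * a i \<omega>\<bar> \<le> C" if "i \<ge> 1" "\<omega> \<in> space M" for i \<omega>
  proof -
    have "\<bar>(K i \<omega> - p i \<omega>) * a i \<omega>\<bar> = \<bar>K i \<omega> - p i \<omega>\<bar> * \<bar>a i \<omega>\<bar>" by (simp add: abs_mult)
    also have "\<dots> \<le> 1 * C" by (rule mult_mono) (use dif[OF that] ab[OF that] in auto)
    finally show ?thesis by simp
  qed
  have Sb: "\<bar>S n \<omega>\<bar> \<le> real n * C" if "\<omega> \<in> space M" for n \<omega>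
  proof -
    have "\<bar>S n \<omega>\<bar> \<le> (\<Sum>i=1..n. \<bar>(K i \<omega> - p i \<omega>) * a i \<omega>\<bar>)" unfolding S_def by (rule sum_abs)
    also have "\<dots> \<le> (\<Sum>i=1..n. C)" by (rule sum_mono) (use term_b that in auto)
    finally show ?thesis by simp
  qed
  obtain N1 :: nat where N1: "real N1 > C\<^sup>2 / (e * e)" using reals_Archimedean2 by blast
  show "\<exists>no. \<forall>n\<ge>no. norm ((\<integral>\<omega>. \<bar>(1 / real n) * (\<Sum>i=1..n. (K i \<omega> - p i \<omega>) * a i \<omega>)\<bar> \<partial>M) - 0) < r"
  proof (intro exI allI impI)
    fix n assume n: "n \<ge> max 1 N1"
    then have npos: "real n > 0" by simp
    let ?X = "\<lambda>\<omega>. (1 / real n) * S n \<omega>"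
    have Xb: "\<bar>?X \<omega>\<bar> \<le> C" if "\<omega> \<in> space M" for \<omega>
      using Sb[OF that, of n] npos by (simp add: abs_mult field_simps)
    have iX: "integrable M (\<lambda>\<omega>. \<bar>?X \<omega>\<bar>)"
      by (rule bnd_int[where B=C]) (use Xb SM finite_measure_axioms in auto)
    have iX2: "integrable M (\<lambda>\<omega>. (S n \<omega>)\<^sup>2)"
    proof (rule bnd_int[where B="(real n * C)\<^sup>2"])
      fix x assume x: "x \<in> space M"
      show "\<bar>(S n x)\<^sup>2\<bar> \<le> (real n * C)\<^sup>2"
        using Sb[OF x, of n] C0 by (simp add: abs_le_square_iff[symmetric] power_abs)
    qed (use SM finite_measure_axioms in auto)
    have "(\<integral>\<omega>. \<bar>?X \<omega>\<bar> \<partial>M) \<le> (\<integral>\<omega>. e + (S n \<omega>)\<^sup>2 / (real n ^ 2 * e) \<partial>M)"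
    proof (rule integral_mono[OF iX])
      show "integrable M (\<lambda>\<omega>. e + (S n \<omega>)\<^sup>2 / (real n ^ 2 * e))"
        using iX2 by simp
      fix \<omega> assume "\<omega> \<in> space M"
      show "\<bar>?X \<omega>\<bar> \<le> e + (S n \<omega>)\<^sup>2 / (real n ^ 2 * e)"
        using abs_le_sq_bound[OF e, of "?X \<omega>"] npos by (simp add: power_mult_distrib power_divide)
    qed
    also have "\<dots> = e + (\<integral>\<omega>. (S n \<omega>)\<^sup>2 \<partial>M) / (real n ^ 2 * e)"
      using iX2 by (simp add: prob_space)
    also have "(\<integral>\<omega>. (S n \<omega>)\<^sup>2 \<partial>M) \<le> real n * C\<^sup>2"
      unfolding S_def by (rule mg_L2[OF P D pb am ab])
    then have "(\<integral>\<omega>. (S n \<omega>)\<^sup>2 \<partial>M) / (real n ^ 2 * e) \<le> real n * C\<^sup>2 / (real n ^ 2 * e)"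
      using npos e by (intro divide_right_mono) auto
    also have "real n * C\<^sup>2 / (real n ^ 2 * e) = C\<^sup>2 / (real n * e)"
      using npos by (simp add: power2_eq_square)
    also have "\<dots> < e"
    proof -
      have "C\<^sup>2 / (e * e) < real n" using N1 n by linarith
      then have "C\<^sup>2 < real n * (e * e)" using e by (simp add: field_simps)
      then show ?thesis using npos e by (simp add: field_simps)
    qed
    finally have "(\<integral>\<omega>. \<bar>?X \<omega>\<bar> \<partial>M) < r" unfolding e_def by simp
    then show "norm ((\<integral>\<omega>. \<bar>(1 / real n) * (\<Sum>i=1..n. (K i \<omega> - p i \<omega>) * a i \<omega>)\<bar> \<partial>M) - 0) < r"
      unfolding S_def by simp
  qed
qed




definition YH :: "(nat \<Rightarrow> 'a \<Rightarrow> real) \<Rightarrow> (nat \<Rightarrow> 'a \<Rightarrow> real) \<Rightarrow> (nat \<Rightarrow> real) \<Rightarrow> nat \<Rightarrow> 'a \<Rightarrow> real" where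
  "YH w q y n \<omega> = (if n = 0 then 0 else (1 / real n) * (\<Sum>j=1..n. w j \<omega> * y j / q j \<omega>))"

locale arm =
  fixes M :: "'a measure" and K p w q :: "nat \<Rightarrow> 'a \<Rightarrow> real"
    and Y0 Y1 y :: "nat \<Rightarrow> real" and s c sg qs \<delta> Mb :: real
  assumes P: "prob_space M"
    and D: "sequential_design M K Y0 Y1 p"
    and pb: "\<And>i \<omega>. i \<ge> 1 \<Longrightarrow> \<omega> \<in> space M \<Longrightarrow> 0 \<le> p i \<omega> \<and> p i \<omega> \<le> 1"
    and wq: "\<And>i \<omega>. i \<ge> 1 \<Longrightarrow> \<omega> \<in> space M \<Longrightarrow> w i \<omega> - q i \<omega> = s * (K i \<omega> - p i \<omega>)"
    and w01: "\<And>i \<omega>. i \<ge> 1 \<Longrightarrow> \<omega> \<in> space M \<Longrightarrow> w i \<omega> = 0 \<or> w i \<omega> = 1"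
    and wm: "\<And>i. i \<ge> 1 \<Longrightarrow> w i \<in> borel_measurable M"
    and qm: "\<And>i. i \<ge> 1 \<Longrightarrow> q i \<in> borel_measurable (past M K Y0 Y1 i)"
    and qb: "\<And>i \<omega>. i \<ge> 1 \<Longrightarrow> \<omega> \<in> space M \<Longrightarrow> \<delta> \<le> q i \<omega> \<and> q i \<omega> \<le> 1"
    and delta: "\<delta> > 0"
    and yb: "\<And>i. i \<ge> 1 \<Longrightarrow> \<bar>y i\<bar> \<le> Mb"
    and ym: "(\<lambda>N. Ybar y N) \<longlonglongrightarrow> c"
    and yv: "(\<lambda>N. Svar y N) \<longlonglongrightarrow> sg"
    and qc: "conv_in_prob M q qs"
    and qs: "qs > 0"
begin

lemma PS: "prob_space M" by (rule P)

lemma FM: "finite_measure M"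
  using P by (simp add: prob_space_def)

lemma Mb0: "Mb \<ge> 0" using yb[of 1] by simp

lemma qM: "i \<ge> 1 \<Longrightarrow> q i \<in> borel_measurable M"
  using measurable_from_subalg[OF past_subalg[OF D] qm] by blast

lemma YH_meas: "YH w q y n \<in> borel_measurable M"
proof (cases "n = 0")
  case True then show ?thesis unfolding YH_def by simp
next
  case False
  have "(\<lambda>\<omega>. \<Sum>j=1..n. w j \<omega> * y j / q j \<omega>) \<in> borel_measurable M"
  proof (rule borel_measurable_sum)
    fix j assume "j \<in> {1..n}"
    then have "w j \<in> borel_measurable M" "q j \<in> borel_measurable M" using wm qM by auto
    then show "(\<lambda>\<omega>. w j \<omega> * y j / q j \<omega>) \<in> borel_measurable M" by measurable
  qed
  then show ?thesis unfolding YH_def[abs_def] using False by simp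
qed

lemma YH_bound: "\<omega> \<in> space M \<Longrightarrow> \<bar>YH w q y n \<omega>\<bar> \<le> Mb / \<delta>"
proof (cases "n = 0")
  case True then show ?thesis using Mb0 delta unfolding YH_def by simp
next
  case False
  assume w: "\<omega> \<in> space M"
  have t: "\<bar>w j \<omega> * y j / q j \<omega>\<bar> \<le> Mb / \<delta>" if "j \<in> {1..n}" for j
  proof -
    have j: "j \<ge> 1" using that by simp
    have qj: "\<delta> \<le> q j \<omega>" using qb[OF j w] by simp
    have "\<bar>w j \<omega> * y j / q j \<omega>\<bar> = \<bar>w j \<omega>\<bar> * \<bar>y j\<bar> / q j \<omega>" using qj delta by (simp add: abs_mult)
    also have "\<dots> \<le> 1 * Mb / q j \<omega>"
      using w01[OF j w] yb[OF j] qj delta by (intro divide_right_mono mult_mono) auto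
    also have "\<dots> \<le> Mb / \<delta>" using qj delta Mb0 by (simp add: frac_le)
    finally show ?thesis .
  qed
  have "\<bar>\<Sum>j=1..n. w j \<omega> * y j / q j \<omega>\<bar> \<le> (\<Sum>j=1..n. Mb / \<delta>)"
    by (rule order_trans[OF sum_abs sum_mono]) (use t in auto)
  then have "\<bar>\<Sum>j=1..n. w j \<omega> * y j / q j \<omega>\<bar> \<le> real n * (Mb / \<delta>)" by simp
  then show ?thesis unfolding YH_def using False by (simp add: abs_mult field_simps)
qed

end




lemma S_bound:
  assumes D: "sequential_design M K Y0 Y1 p"
    and pb: "\<And>i \<omega>. i \<ge> 1 \<Longrightarrow> \<omega> \<in> space M \<Longrightarrow> 0 \<le> p i \<omega> \<and> p i \<omega> \<le> 1"
    and ab: "\<And>i \<omega>. i \<ge> 1 \<Longrightarrow> \<omega> \<in> space M \<Longrightarrow> \<bar>a i \<omega>\<bar> \<le> C"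
    and w: "\<omega> \<in> space M"
  shows "\<bar>\<Sum>i=1..n. (K i \<omega> - p i \<omega>) * a i \<omega>\<bar> \<le> real n * C"
proof -
  have term_b: "\<bar>(K i \<omega> - p i \<omega>) * a i \<omega>\<bar> \<le> C" if "i \<ge> 1" for i
  proof -
    have dif: "\<bar>K i \<omega> - p i \<omega>\<bar> \<le> 1"
      using design_K(2)[OF D that w] pb[OF that w] by auto
    have "\<bar>(K i \<omega> - p i \<omega>) * a i \<omega>\<bar> = \<bar>K i \<omega> - p i \<omega>\<bar> * \<bar>a i \<omega>\<bar>" by (simp add: abs_mult)
    also have "\<dots> \<le> 1 * C" by (rule mult_mono) (use dif ab[OF that w] in auto)
    finally show ?thesis by simp
  qed
  have "\<bar>\<Sum>i=1..n. (K i \<omega> - p i \<omega>) * a i \<omega>\<bar> \<le> (\<Sum>i=1..n. \<bar>(K i \<omega> - p i \<omega>) * a i \<omega>\<bar>)" by (rule sum_abs)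
  also have "\<dots> \<le> (\<Sum>i=1..n. C)" by (rule sum_mono) (use term_b in auto)
  finally show ?thesis by simp
qed

lemma S_int:
  assumes P: "prob_space M" and D: "sequential_design M K Y0 Y1 p"
    and pb: "\<And>i \<omega>. i \<ge> 1 \<Longrightarrow> \<omega> \<in> space M \<Longrightarrow> 0 \<le> p i \<omega> \<and> p i \<omega> \<le> 1"
    and am: "\<And>i. i \<ge> 1 \<Longrightarrow> a i \<in> borel_measurable (past M K Y0 Y1 i)"
    and ab: "\<And>i \<omega>. i \<ge> 1 \<Longrightarrow> \<omega> \<in> space M \<Longrightarrow> \<bar>a i \<omega>\<bar> \<le> C"
  shows "(\<lambda>\<omega>. \<Sum>i=1..n. (K i \<omega> - p i \<omega>) * a i \<omega>) \<in> borel_measurable M"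
    "integrable M (\<lambda>\<omega>. \<Sum>i=1..n. (K i \<omega> - p i \<omega>) * a i \<omega>)"
proof -
  show m: "(\<lambda>\<omega>. \<Sum>i=1..n. (K i \<omega> - p i \<omega>) * a i \<omega>) \<in> borel_measurable M"
    using measurable_from_subalg[OF past_subalg[OF D] S_meas[OF D am, of n "Suc n"]] by simp
  show "integrable M (\<lambda>\<omega>. \<Sum>i=1..n. (K i \<omega> - p i \<omega>) * a i \<omega>)"
    by (rule bnd_int[OF _ m, where B="real n * C"]) 
       (use P S_bound[OF D pb ab] in \<open>auto simp: prob_space_def\<close>)
qed

context arm begin

lemma YH_L1: "(\<lambda>n. \<integral>\<omega>. \<bar>YH w q y n \<omega> - c\<bar> \<partial>M) \<longlonglongrightarrow> 0"
proof -
  interpret prob_space M by (rule P)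
  define a where "a j \<omega> = s * y j / q j \<omega>" for j \<omega>
  have am: "a j \<in> borel_measurable (past M K Y0 Y1 j)" if "j \<ge> 1" for j
    using qm[OF that] unfolding a_def[abs_def] by measurable
  have ab: "\<bar>a j \<omega>\<bar> \<le> \<bar>s\<bar> * (Mb / \<delta>)" if "j \<ge> 1" "\<omega> \<in> space M" for j \<omega>
  proof -
    have qj: "\<delta> \<le> q j \<omega>" using qb[OF that] by simp
    have "\<bar>a j \<omega>\<bar> = \<bar>s\<bar> * (\<bar>y j\<bar> / q j \<omega>)" using qj delta unfolding a_def by (simp add: abs_mult)
    also have "\<dots> \<le> \<bar>s\<bar> * (Mb / \<delta>)"
      using yb[OF that(1)] qj delta Mb0 by (intro mult_left_mono frac_le) auto
    finally show ?thesis .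
  qed
  define m where "m n = (\<integral>\<omega>. \<bar>(1 / real n) * (\<Sum>i=1..n. (K i \<omega> - p i \<omega>) * a i \<omega>)\<bar> \<partial>M)" for n
  have mlim: "m \<longlonglongrightarrow> 0" unfolding m_def by (rule mg_L1[OF P D pb am ab])
  have lim2: "(\<lambda>n. m n + \<bar>Ybar y n - c\<bar>) \<longlonglongrightarrow> 0 + 0"
    by (intro tendsto_add mlim tendsto_rabs_zero) (use ym LIM_zero in blast)
  show ?thesis
  proof (rule tendsto_sandwich[OF _ _ tendsto_const])
    show "\<forall>\<^sub>F n in sequentially. 0 \<le> (\<integral>\<omega>. \<bar>YH w q y n \<omega> - c\<bar> \<partial>M)" by simp
    show "(\<lambda>n. m n + \<bar>Ybar y n - c\<bar>) \<longlonglongrightarrow> 0" using lim2 by simp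
    show "\<forall>\<^sub>F n in sequentially. (\<integral>\<omega>. \<bar>YH w q y n \<omega> - c\<bar> \<partial>M) \<le> m n + \<bar>Ybar y n - c\<bar>"
    proof (rule eventually_sequentiallyI[of 1])
      fix n :: nat assume n: "n \<ge> 1"
      have Si: "integrable M (\<lambda>\<omega>. \<bar>(1 / real n) * (\<Sum>i=1..n. (K i \<omega> - p i \<omega>) * a i \<omega>)\<bar>)"
        using S_int(2)[OF P D pb am ab, of n] by (intro integrable_abs integrable_mult_right) 
      have Yi: "integrable M (\<lambda>\<omega>. \<bar>YH w q y n \<omega> - c\<bar>)"
      proof (rule bnd_int[where B="Mb / \<delta> + \<bar>c\<bar>"])
        fix x assume x: "x \<in> space M"
        have h: "\<bar>YH w q y n x\<bar> \<le> Mb / \<delta>" by (rule YH_bound[OF x])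
        show "\<bar>\<bar>YH w q y n x - c\<bar>\<bar> \<le> Mb / \<delta> + \<bar>c\<bar>"
          using h abs_triangle_ineq4[of "YH w q y n x" c] by simp
      qed (use FM YH_meas in auto)
      have eq: "YH w q y n \<omega> - Ybar y n = (1 / real n) * (\<Sum>i=1..n. (K i \<omega> - p i \<omega>) * a i \<omega>)"
        if w: "\<omega> \<in> space M" for \<omega>
      proof -
        have "(\<Sum>j=1..n. w j \<omega> * y j / q j \<omega>) - (\<Sum>j=1..n. y j) = (\<Sum>j=1..n. w j \<omega> * y j / q j \<omega> - y j)"
          by (simp add: sum_subtractf)
        also have "\<dots> = (\<Sum>i=1..n. (K i \<omega> - p i \<omega>) * a i \<omega>)"
        proof (rule sum.cong[OF refl])
          fix j assume "j \<in> {1..n}"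
          then have j: "j \<ge> 1" by simp
          have qj: "q j \<omega> > 0" using qb[OF j w] delta by linarith
          have "w j \<omega> * y j / q j \<omega> - y j = (w j \<omega> - q j \<omega>) * y j / q j \<omega>"
            using qj by (simp add: field_simps)
          also have "\<dots> = (K j \<omega> - p j \<omega>) * a j \<omega>" unfolding wq[OF j w] a_def by simp
          finally show "w j \<omega> * y j / q j \<omega> - y j = (K j \<omega> - p j \<omega>) * a j \<omega>" .
        qed
        finally have "(\<Sum>j=1..n. w j \<omega> * y j / q j \<omega>) - (\<Sum>j=1..n. y j) = (\<Sum>i=1..n. (K i \<omega> - p i \<omega>) * a i \<omega>)" .
        then show ?thesis using n unfolding YH_def Ybar_def by (simp add: diff_divide_distrib[symmetric])
      qed
      have "(\<integral>\<omega>. \<bar>YH w q y n \<omega> - c\<bar> \<partial>M) \<le> (\<integral>\<omega>. \<bar>(1 / real n) * (\<Sum>i=1..n. (K i \<omega> - p i \<omega>) * a i \<omega>)\<bar> + \<bar>Ybar y n - c\<bar> \<partial>M)"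
      proof (rule integral_mono[OF Yi])
        show "integrable M (\<lambda>\<omega>. \<bar>(1 / real n) * (\<Sum>i=1..n. (K i \<omega> - p i \<omega>) * a i \<omega>)\<bar> + \<bar>Ybar y n - c\<bar>)"
          using Si by simp
        fix \<omega> assume w: "\<omega> \<in> space M"
        show "\<bar>YH w q y n \<omega> - c\<bar> \<le> \<bar>(1 / real n) * (\<Sum>i=1..n. (K i \<omega> - p i \<omega>) * a i \<omega>)\<bar> + \<bar>Ybar y n - c\<bar>"
          using eq[OF w] by linarith
      qed
      also have "\<dots> = m n + \<bar>Ybar y n - c\<bar>"
        unfolding m_def using Si by (simp add: prob_space)
      finally show "(\<integral>\<omega>. \<bar>YH w q y n \<omega> - c\<bar> \<partial>M) \<le> m n + \<bar>Ybar y n - c\<bar>" .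
    qed
  qed
qed

end




context arm begin

lemma qM': "q (Suc n) \<in> borel_measurable M" using qM by simp

lemma q_L1: "(\<lambda>n. \<integral>\<omega>. \<bar>q n \<omega> - qs\<bar> \<partial>M) \<longlonglongrightarrow> 0"
proof (rule LIMSEQ_imp_Suc)
  have c: "conv_in_prob M (\<lambda>n. q (Suc n)) qs"
    using qc unfolding conv_in_prob_def by (auto intro: LIMSEQ_Suc)
  show "(\<lambda>n. \<integral>\<omega>. \<bar>q (Suc n) \<omega> - qs\<bar> \<partial>M) \<longlonglongrightarrow> 0"
  proof (rule cip_L1_conv[OF P c qM', where B="1 + qs"])
    fix n \<omega> assume w: "\<omega> \<in> space M"
    show "\<bar>q (Suc n) \<omega> - qs\<bar> \<le> 1 + qs" using qb[OF _ w, of "Suc n"] delta qs by auto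
  qed
qed

lemma q_int: assumes i: "i \<ge> 1" shows "integrable M (\<lambda>\<omega>. \<bar>q i \<omega> - qs\<bar>)"
proof (rule bnd_int[where B="1 + qs"])
  fix x assume x: "x \<in> space M"
  show "\<bar>\<bar>q i x - qs\<bar>\<bar> \<le> 1 + qs" using qb[OF i x] delta qs by auto
qed (use FM qM[OF i] in auto)

lemma YHc_int: "integrable M (\<lambda>\<omega>. \<bar>YH w q y n \<omega> - c\<bar>)"
proof (rule bnd_int[where B="Mb / \<delta> + \<bar>c\<bar>"])
  fix x assume x: "x \<in> space M"
  have h: "\<bar>YH w q y n x\<bar> \<le> Mb / \<delta>" by (rule YH_bound[OF x])
  show "\<bar>\<bar>YH w q y n x - c\<bar>\<bar> \<le> Mb / \<delta> + \<bar>c\<bar>"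
    using h abs_triangle_ineq4[of "YH w q y n x" c] by simp
qed (use FM YH_meas in auto)

lemma V_lim: "(\<lambda>N. (1 / real N) * (\<Sum>i=1..N. (y i - c)\<^sup>2)) \<longlonglongrightarrow> sg"
proof -
  have eq: "(1 / real N) * (\<Sum>i=1..N. (y i - c)\<^sup>2) = Svar y N + (Ybar y N - c)\<^sup>2" if N: "N \<ge> 1" for N
  proof -
    let ?m = "Ybar y N"
    have m: "(\<Sum>i=1..N. y i) = real N * ?m" using N unfolding Ybar_def by simp
    have "(\<Sum>i=1..N. (y i - c)\<^sup>2) = (\<Sum>i=1..N. (y i - ?m)\<^sup>2 + 2 * (?m - c) * y i + (c\<^sup>2 - ?m\<^sup>2))"
      by (rule sum.cong[OF refl]) (simp add: power2_eq_square algebra_simps)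
    also have "\<dots> = (\<Sum>i=1..N. (y i - ?m)\<^sup>2) + 2 * (?m - c) * (\<Sum>i=1..N. y i) + real N * (c\<^sup>2 - ?m\<^sup>2)"
      by (simp add: sum.distrib sum_distrib_left)
    also have "\<dots> = (\<Sum>i=1..N. (y i - ?m)\<^sup>2) + real N * (?m - c)\<^sup>2"
      unfolding m by (simp add: power2_eq_square algebra_simps)
    finally show ?thesis using N unfolding Svar_def by (simp add: field_simps)
  qed
  have "(\<lambda>N. Svar y N + (Ybar y N - c)\<^sup>2) \<longlonglongrightarrow> sg + (c - c)\<^sup>2"
    by (intro tendsto_intros yv ym)
  then have "(\<lambda>N. Svar y N + (Ybar y N - c)\<^sup>2) \<longlonglongrightarrow> sg" by simp
  then show ?thesis
    by (rule Lim_transform_eventually) (use eq in \<open>auto intro!: eventually_sequentiallyI[of 1]\<close>)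
qed

end




context arm begin

lemma A_conv:
  "conv_in_prob M (\<lambda>N \<omega>. (1 / real N) * (\<Sum>i=1..N. w i \<omega> * (y i - YH w q y (i - 1) \<omega>)\<^sup>2)) (qs * sg)"
proof -
  interpret prob_space M by (rule P)
  define L where "L = 2 * Mb + Mb / \<delta> + \<bar>c\<bar>"
  define L2 where "L2 = (Mb + \<bar>c\<bar>)\<^sup>2"
  define aW where "aW i \<omega> = s * (y i - c)\<^sup>2" for i and \<omega> :: 'a
  define Wt where "Wt N \<omega> = (1 / real N) * (\<Sum>i=1..N. (K i \<omega> - p i \<omega>) * aW i \<omega>)" for N \<omega>
  define V where "V N = (1 / real N) * (\<Sum>i=1..N. (y i - c)\<^sup>2)" for N
  define Z where "Z N \<omega> = L * ((1 / real N) * (\<Sum>i=1..N. \<bar>YH w q y (i - 1) \<omega> - c\<bar>)) + \<bar>Wt N \<omega>\<bar>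
      + L2 * ((1 / real N) * (\<Sum>i=1..N. \<bar>q i \<omega> - qs\<bar>)) + qs * \<bar>V N - sg\<bar>" for N \<omega>
  have L0: "L \<ge> 0" unfolding L_def using Mb0 delta by simp
  have aWm: "aW i \<in> borel_measurable (past M K Y0 Y1 i)" for i unfolding aW_def by simp
  have aWb: "\<bar>aW i \<omega>\<bar> \<le> \<bar>s\<bar> * L2" if "i \<ge> 1" for i \<omega>
  proof -
    have "\<bar>y i - c\<bar> \<le> Mb + \<bar>c\<bar>" using yb[OF that] by linarith
    then have "(y i - c)\<^sup>2 \<le> L2" unfolding L2_def
      by (metis abs_ge_zero abs_le_square_iff abs_of_nonneg add_nonneg_nonneg Mb0)
    then show ?thesis unfolding aW_def by (simp add: abs_mult mult_left_mono)
  qed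
  have Wt_int: "integrable M (\<lambda>\<omega>. \<bar>Wt N \<omega>\<bar>)" for N
    unfolding Wt_def using S_int(2)[OF P D pb aWm aWb, of N] by (intro integrable_abs integrable_mult_right)
  have Wt_lim: "(\<lambda>N. \<integral>\<omega>. \<bar>Wt N \<omega>\<bar> \<partial>M) \<longlonglongrightarrow> 0"
    unfolding Wt_def by (rule mg_L1[OF P D pb aWm aWb])
  have i1: "integrable M (\<lambda>\<omega>. L * ((1 / real N) * (\<Sum>i=1..N. \<bar>YH w q y (i - 1) \<omega> - c\<bar>)))" for N
    using YHc_int by (intro integrable_mult_right integrable_sum) auto
  have i3: "integrable M (\<lambda>\<omega>. L2 * ((1 / real N) * (\<Sum>i=1..N. \<bar>q i \<omega> - qs\<bar>)))" for N
    using q_int by (intro integrable_mult_right integrable_sum) auto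
  have intZ: "(\<integral>\<omega>. Z N \<omega> \<partial>M) = L * ((1 / real N) * (\<Sum>i=1..N. (\<integral>\<omega>. \<bar>YH w q y (i - 1) \<omega> - c\<bar> \<partial>M)))
      + (\<integral>\<omega>. \<bar>Wt N \<omega>\<bar> \<partial>M) + L2 * ((1 / real N) * (\<Sum>i=1..N. (\<integral>\<omega>. \<bar>q i \<omega> - qs\<bar> \<partial>M))) + qs * \<bar>V N - sg\<bar>" for N
  proof -
    have "(\<integral>\<omega>. Z N \<omega> \<partial>M) = (\<integral>\<omega>. L * ((1 / real N) * (\<Sum>i=1..N. \<bar>YH w q y (i - 1) \<omega> - c\<bar>)) \<partial>M)
       + (\<integral>\<omega>. \<bar>Wt N \<omega>\<bar> \<partial>M) + (\<integral>\<omega>. L2 * ((1 / real N) * (\<Sum>i=1..N. \<bar>q i \<omega> - qs\<bar>)) \<partial>M) + qs * \<bar>V N - sg\<bar>"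
      unfolding Z_def using i1[of N] i3[of N] Wt_int[of N] by (simp add: prob_space)
    also have "(\<integral>\<omega>. L * ((1 / real N) * (\<Sum>i=1..N. \<bar>YH w q y (i - 1) \<omega> - c\<bar>)) \<partial>M)
       = L * ((1 / real N) * (\<Sum>i=1..N. (\<integral>\<omega>. \<bar>YH w q y (i - 1) \<omega> - c\<bar> \<partial>M)))"
      using YHc_int by (simp add: integral_sum)
    also have "(\<integral>\<omega>. L2 * ((1 / real N) * (\<Sum>i=1..N. \<bar>q i \<omega> - qs\<bar>)) \<partial>M)
       = L2 * ((1 / real N) * (\<Sum>i=1..N. (\<integral>\<omega>. \<bar>q i \<omega> - qs\<bar> \<partial>M)))"
      using q_int by (simp add: integral_sum)
    finally show ?thesis .
  qed
  have Zlim: "(\<lambda>N. \<integral>\<omega>. Z N \<omega> \<partial>M) \<longlonglongrightarrow> 0"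
  proof -
    have "(\<lambda>N. L * ((1 / real N) * (\<Sum>i=1..N. (\<integral>\<omega>. \<bar>YH w q y (i - 1) \<omega> - c\<bar> \<partial>M)))
      + (\<integral>\<omega>. \<bar>Wt N \<omega>\<bar> \<partial>M) + L2 * ((1 / real N) * (\<Sum>i=1..N. (\<integral>\<omega>. \<bar>q i \<omega> - qs\<bar> \<partial>M))) + qs * \<bar>V N - sg\<bar>)
      \<longlonglongrightarrow> L * 0 + 0 + L2 * 0 + qs * 0"
    proof -
      have "V \<longlonglongrightarrow> sg" unfolding V_def by (rule V_lim)
      then have v: "(\<lambda>N. \<bar>V N - sg\<bar>) \<longlonglongrightarrow> 0" by (intro tendsto_rabs_zero) (use LIM_zero in blast)
      have c1: "(\<lambda>N. (1 / real N) * (\<Sum>i=1..N. (\<integral>\<omega>. \<bar>YH w q y (i - 1) \<omega> - c\<bar> \<partial>M))) \<longlonglongrightarrow> 0"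
        by (rule cesaro_shift[OF YH_L1])
      have c3: "(\<lambda>N. (1 / real N) * (\<Sum>i=1..N. (\<integral>\<omega>. \<bar>q i \<omega> - qs\<bar> \<partial>M))) \<longlonglongrightarrow> 0"
        by (rule cesaro0[OF q_L1])
      show ?thesis
        by (intro tendsto_add tendsto_mult_left c1 c3 Wt_lim v)
    qed
    then show ?thesis unfolding intZ by simp
  qed
  show ?thesis
  proof (rule cip_L1[OF P _ _ _ Zlim])
    fix N
    show "(\<lambda>\<omega>. (1 / real N) * (\<Sum>i=1..N. w i \<omega> * (y i - YH w q y (i - 1) \<omega>)\<^sup>2)) \<in> borel_measurable M"
    proof (rule borel_measurable_times[OF borel_measurable_const], rule borel_measurable_sum)
      fix i assume "i \<in> {1..N}"
      then have "w i \<in> borel_measurable M" using wm by auto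
      then show "(\<lambda>\<omega>. w i \<omega> * (y i - YH w q y (i - 1) \<omega>)\<^sup>2) \<in> borel_measurable M"
        using YH_meas[of "i - 1"] by measurable
    qed
    show "integrable M (Z N)"
      unfolding Z_def using i1[of N] i3[of N] Wt_int[of N] by simp
  next
    show "\<forall>\<^sub>F N in sequentially. \<forall>\<omega>\<in>space M.
        \<bar>(1 / real N) * (\<Sum>i=1..N. w i \<omega> * (y i - YH w q y (i - 1) \<omega>)\<^sup>2) - qs * sg\<bar> \<le> Z N \<omega>"
    proof (rule eventually_sequentiallyI[of 1], intro ballI)
      fix N :: nat and \<omega> assume N: "N \<ge> 1" and w: "\<omega> \<in> space M"
      define h where "h i = YH w q y (i - 1) \<omega>" for i
      define t1 where "t1 i = w i \<omega> * ((y i - h i)\<^sup>2 - (y i - c)\<^sup>2)" for i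
      define t3 where "t3 i = (q i \<omega> - qs) * (y i - c)\<^sup>2" for i
      have per: "w i \<omega> * (y i - h i)\<^sup>2 = t1 i + (K i \<omega> - p i \<omega>) * aW i \<omega> + t3 i + qs * (y i - c)\<^sup>2"
        if "i \<in> {1..N}" for i
      proof -
        have i: "i \<ge> 1" using that by simp
        have wi: "w i \<omega> = q i \<omega> + s * (K i \<omega> - p i \<omega>)" using wq[OF i w] by simp
        show ?thesis unfolding t1_def t3_def aW_def wi by (simp add: algebra_simps)
      qed
      have "(\<Sum>i=1..N. w i \<omega> * (y i - h i)\<^sup>2) = (\<Sum>i=1..N. t1 i + (K i \<omega> - p i \<omega>) * aW i \<omega> + t3 i + qs * (y i - c)\<^sup>2)"
        by (rule sum.cong[OF refl]) (rule per)
      also have "\<dots> = (\<Sum>i=1..N. t1 i) + (\<Sum>i=1..N. (K i \<omega> - p i \<omega>) * aW i \<omega>) + (\<Sum>i=1..N. t3 i) + qs * (\<Sum>i=1..N. (y i - c)\<^sup>2)"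
        by (simp add: sum.distrib sum_distrib_left)
      finally have sumeq: "(\<Sum>i=1..N. w i \<omega> * (y i - h i)\<^sup>2) = (\<Sum>i=1..N. t1 i) + (\<Sum>i=1..N. (K i \<omega> - p i \<omega>) * aW i \<omega>) + (\<Sum>i=1..N. t3 i) + qs * (\<Sum>i=1..N. (y i - c)\<^sup>2)" .
      have Npos: "real N > 0" using N by simp
      have dec: "(1 / real N) * (\<Sum>i=1..N. w i \<omega> * (y i - h i)\<^sup>2) - qs * sg
          = (1 / real N) * (\<Sum>i=1..N. t1 i) + Wt N \<omega> + (1 / real N) * (\<Sum>i=1..N. t3 i) + qs * (V N - sg)"
        unfolding sumeq Wt_def V_def by (simp add: algebra_simps)
      have b1: "\<bar>t1 i\<bar> \<le> L * \<bar>h i - c\<bar>" if "i \<in> {1..N}" for i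
      proof -
        have i: "i \<ge> 1" using that by simp
        have hb: "\<bar>h i\<bar> \<le> Mb / \<delta>" unfolding h_def by (rule YH_bound[OF w])
        have "\<bar>2 * y i - h i - c\<bar> \<le> L" unfolding L_def using yb[OF i] hb by linarith
        have w1: "\<bar>w i \<omega>\<bar> \<le> 1" using w01[OF i w] by auto
        have "t1 i = w i \<omega> * ((c - h i) * (2 * y i - h i - c))" unfolding t1_def
          by (simp add: power2_eq_square algebra_simps)
        then have "\<bar>t1 i\<bar> = \<bar>w i \<omega>\<bar> * (\<bar>h i - c\<bar> * \<bar>2 * y i - h i - c\<bar>)" by (simp add: abs_mult abs_minus_commute)
        also have "\<dots> \<le> 1 * (\<bar>h i - c\<bar> * L)"
          by (intro mult_mono mult_left_mono) (use w1 \<open>\<bar>2 * y i - h i - c\<bar> \<le> L\<close> in auto)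
        finally show ?thesis by (simp add: mult.commute)
      qed
      have b3: "\<bar>t3 i\<bar> \<le> L2 * \<bar>q i \<omega> - qs\<bar>" if "i \<in> {1..N}" for i
      proof -
        have i: "i \<ge> 1" using that by simp
        have "\<bar>y i - c\<bar> \<le> Mb + \<bar>c\<bar>" using yb[OF i] by linarith
        then have "(y i - c)\<^sup>2 \<le> L2" unfolding L2_def
          by (metis abs_ge_zero abs_le_square_iff abs_of_nonneg add_nonneg_nonneg Mb0)
        then have "\<bar>q i \<omega> - qs\<bar> * (y i - c)\<^sup>2 \<le> \<bar>q i \<omega> - qs\<bar> * L2" by (intro mult_left_mono) auto
        then show ?thesis unfolding t3_def by (simp add: abs_mult mult.commute)
      qed
      have s1: "\<bar>(1 / real N) * (\<Sum>i=1..N. t1 i)\<bar> \<le> L * ((1 / real N) * (\<Sum>i=1..N. \<bar>h i - c\<bar>))"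
      proof -
        have "\<bar>\<Sum>i=1..N. t1 i\<bar> \<le> (\<Sum>i=1..N. L * \<bar>h i - c\<bar>)"
          by (rule order_trans[OF sum_abs sum_mono]) (use b1 in auto)
        then have "\<bar>\<Sum>i=1..N. t1 i\<bar> \<le> L * (\<Sum>i=1..N. \<bar>h i - c\<bar>)" by (simp add: sum_distrib_left)
        then show ?thesis using Npos by (simp add: abs_mult field_simps)
      qed
      have s3: "\<bar>(1 / real N) * (\<Sum>i=1..N. t3 i)\<bar> \<le> L2 * ((1 / real N) * (\<Sum>i=1..N. \<bar>q i \<omega> - qs\<bar>))"
      proof -
        have "\<bar>\<Sum>i=1..N. t3 i\<bar> \<le> (\<Sum>i=1..N. L2 * \<bar>q i \<omega> - qs\<bar>)"
          by (rule order_trans[OF sum_abs sum_mono]) (use b3 in auto)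
        then have "\<bar>\<Sum>i=1..N. t3 i\<bar> \<le> L2 * (\<Sum>i=1..N. \<bar>q i \<omega> - qs\<bar>)" by (simp add: sum_distrib_left)
        then show ?thesis using Npos by (simp add: abs_mult field_simps)
      qed
      have "\<bar>qs * (V N - sg)\<bar> = qs * \<bar>V N - sg\<bar>" using qs by (simp add: abs_mult)
      then show "\<bar>(1 / real N) * (\<Sum>i=1..N. w i \<omega> * (y i - YH w q y (i - 1) \<omega>)\<^sup>2) - qs * sg\<bar> \<le> Z N \<omega>"
        using dec s1 s3 unfolding Z_def h_def by linarith
    qed
  qed
qed

end




context arm begin

lemma sumw_meas: "(\<lambda>\<omega>. \<Sum>i=1..N. w i \<omega>) \<in> borel_measurable M"
  by (rule borel_measurable_sum) (use wm in auto)

lemma B_conv: "conv_in_prob M (\<lambda>N \<omega>. max (\<Sum>i=1..N. w i \<omega>) 1 / real N) qs"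
proof -
  interpret prob_space M by (rule P)
  define aS where "aS i \<omega> = s" for i :: nat and \<omega> :: 'a
  have aSm: "aS i \<in> borel_measurable (past M K Y0 Y1 i)" for i unfolding aS_def by simp
  have aSb: "\<bar>aS i \<omega>\<bar> \<le> \<bar>s\<bar>" for i \<omega> unfolding aS_def by simp
  define Wt where "Wt N \<omega> = (1 / real N) * (\<Sum>i=1..N. (K i \<omega> - p i \<omega>) * aS i \<omega>)" for N \<omega>
  define Z where "Z N \<omega> = 1 / real N + \<bar>Wt N \<omega>\<bar> + (1 / real N) * (\<Sum>i=1..N. \<bar>q i \<omega> - qs\<bar>)" for N \<omega>
  have Wt_int: "integrable M (\<lambda>\<omega>. \<bar>Wt N \<omega>\<bar>)" for N
    unfolding Wt_def using S_int(2)[OF P D pb aSm aSb, of N] by (intro integrable_abs integrable_mult_right)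
  have Wt_lim: "(\<lambda>N. \<integral>\<omega>. \<bar>Wt N \<omega>\<bar> \<partial>M) \<longlonglongrightarrow> 0"
    unfolding Wt_def by (rule mg_L1[OF P D pb aSm aSb])
  have i3: "integrable M (\<lambda>\<omega>. (1 / real N) * (\<Sum>i=1..N. \<bar>q i \<omega> - qs\<bar>))" for N
    using q_int by (intro integrable_mult_right integrable_sum) auto
  have intZ: "(\<integral>\<omega>. Z N \<omega> \<partial>M) = 1 / real N + (\<integral>\<omega>. \<bar>Wt N \<omega>\<bar> \<partial>M)
      + (1 / real N) * (\<Sum>i=1..N. (\<integral>\<omega>. \<bar>q i \<omega> - qs\<bar> \<partial>M))" for N
  proof -
    have "(\<integral>\<omega>. Z N \<omega> \<partial>M) = 1 / real N + (\<integral>\<omega>. \<bar>Wt N \<omega>\<bar> \<partial>M)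
      + (\<integral>\<omega>. (1 / real N) * (\<Sum>i=1..N. \<bar>q i \<omega> - qs\<bar>) \<partial>M)"
      unfolding Z_def using i3[of N] Wt_int[of N] by (simp add: prob_space)
    also have "(\<integral>\<omega>. (1 / real N) * (\<Sum>i=1..N. \<bar>q i \<omega> - qs\<bar>) \<partial>M)
       = (1 / real N) * (\<Sum>i=1..N. (\<integral>\<omega>. \<bar>q i \<omega> - qs\<bar> \<partial>M))"
      using q_int by (simp add: integral_sum)
    finally show ?thesis .
  qed
  have Zlim: "(\<lambda>N. \<integral>\<omega>. Z N \<omega> \<partial>M) \<longlonglongrightarrow> 0"
  proof -
    have c3: "(\<lambda>N. (1 / real N) * (\<Sum>i=1..N. (\<integral>\<omega>. \<bar>q i \<omega> - qs\<bar> \<partial>M))) \<longlonglongrightarrow> 0"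
      by (rule cesaro0[OF q_L1])
    have c0: "(\<lambda>N. 1 / real N) \<longlonglongrightarrow> 0" by (rule lim_const_over_n)
    have "(\<lambda>N. 1 / real N + (\<integral>\<omega>. \<bar>Wt N \<omega>\<bar> \<partial>M)
      + (1 / real N) * (\<Sum>i=1..N. (\<integral>\<omega>. \<bar>q i \<omega> - qs\<bar> \<partial>M))) \<longlonglongrightarrow> 0 + 0 + 0"
      by (intro tendsto_add c0 c3 Wt_lim)
    then show ?thesis unfolding intZ by simp
  qed
  show ?thesis
  proof (rule cip_L1[OF P _ _ _ Zlim])
    fix N
    show "(\<lambda>\<omega>. max (\<Sum>i=1..N. w i \<omega>) 1 / real N) \<in> borel_measurable M"
      using sumw_meas[of N] by measurable
    show "integrable M (Z N)"
      unfolding Z_def using i3[of N] Wt_int[of N] by simp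
  next
    show "\<forall>\<^sub>F N in sequentially. \<forall>\<omega>\<in>space M. \<bar>max (\<Sum>i=1..N. w i \<omega>) 1 / real N - qs\<bar> \<le> Z N \<omega>"
    proof (rule eventually_sequentiallyI[of 1], intro ballI)
      fix N :: nat and \<omega> assume N: "N \<ge> 1" and w: "\<omega> \<in> space M"
      have Npos: "real N > 0" using N by simp
      have sw0: "(\<Sum>i=1..N. w i \<omega>) \<ge> 0"
        by (rule sum_nonneg) (use w01 w in fastforce)
      have m1: "\<bar>max (\<Sum>i=1..N. w i \<omega>) 1 - (\<Sum>i=1..N. w i \<omega>)\<bar> \<le> 1" using sw0 by auto
      have sd: "(\<Sum>i=1..N. w i \<omega>) - real N * qs = (\<Sum>i=1..N. (K i \<omega> - p i \<omega>) * aS i \<omega>) + (\<Sum>i=1..N. q i \<omega> - qs)"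
      proof -
        have "(\<Sum>i=1..N. w i \<omega>) = (\<Sum>i=1..N. (K i \<omega> - p i \<omega>) * aS i \<omega> + (q i \<omega> - qs) + qs)"
        proof (rule sum.cong[OF refl])
          fix i assume "i \<in> {1..N}"
          then have i: "i \<ge> 1" by simp
          show "w i \<omega> = (K i \<omega> - p i \<omega>) * aS i \<omega> + (q i \<omega> - qs) + qs"
            using wq[OF i w] unfolding aS_def by (simp add: algebra_simps)
        qed
        then show ?thesis by (simp add: sum.distrib sum_subtractf)
      qed
      have "max (\<Sum>i=1..N. w i \<omega>) 1 / real N - qs
          = (max (\<Sum>i=1..N. w i \<omega>) 1 - (\<Sum>i=1..N. w i \<omega>)) / real N + Wt N \<omega> + (1 / real N) * (\<Sum>i=1..N. q i \<omega> - qs)"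
        using Npos sd unfolding Wt_def by (simp add: field_simps)
      moreover have "\<bar>(max (\<Sum>i=1..N. w i \<omega>) 1 - (\<Sum>i=1..N. w i \<omega>)) / real N\<bar> \<le> 1 / real N"
        using m1 Npos by (simp add: abs_div divide_right_mono)
      moreover have "\<bar>(1 / real N) * (\<Sum>i=1..N. q i \<omega> - qs)\<bar> \<le> (1 / real N) * (\<Sum>i=1..N. \<bar>q i \<omega> - qs\<bar>)"
        using Npos by (simp add: abs_mult divide_right_mono sum_abs)
      ultimately show "\<bar>max (\<Sum>i=1..N. w i \<omega>) 1 / real N - qs\<bar> \<le> Z N \<omega>"
        unfolding Z_def by linarith
    qed
  qed
qed

lemma arm_main:
  "conv_in_prob M (\<lambda>N \<omega>. (1 / max (\<Sum>i=1..N. w i \<omega>) 1) * (\<Sum>i=1..N. w i \<omega> * (y i - YH w q y (i - 1) \<omega>)\<^sup>2)) sg"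
proof -
  define A where "A N \<omega> = (1 / real N) * (\<Sum>i=1..N. w i \<omega> * (y i - YH w q y (i - 1) \<omega>)\<^sup>2)" for N \<omega>
  define B where "B N \<omega> = max (\<Sum>i=1..N. w i \<omega>) 1 / real N" for N \<omega>
  have Am: "A N \<in> borel_measurable M" for N
    unfolding A_def
  proof (rule borel_measurable_times[OF borel_measurable_const], rule borel_measurable_sum)
    fix i assume "i \<in> {1..N}"
    then have "w i \<in> borel_measurable M" using wm by auto
    then show "(\<lambda>\<omega>. w i \<omega> * (y i - YH w q y (i - 1) \<omega>)\<^sup>2) \<in> borel_measurable M"
      using YH_meas[of "i - 1"] by measurable
  qed
  have Bm: "B N \<in> borel_measurable M" for N
    unfolding B_def using sumw_meas[of N] by measurable
  have cont: "isCont (\<lambda>z. (\<lambda>x y. x / y) (fst z) (snd z)) (qs * sg, qs)"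
    using qs by (auto intro!: continuous_intros)
  have "conv_in_prob M (\<lambda>N \<omega>. (\<lambda>x y. x / y) (A N \<omega>) (B N \<omega>)) ((\<lambda>x y. x / y) (qs * sg) qs)"
  proof (rule cip_cont2[OF P _ _ Am Bm cont])
    show "conv_in_prob M A (qs * sg)" unfolding A_def[abs_def] by (rule A_conv)
    show "conv_in_prob M B qs" unfolding B_def[abs_def] by (rule B_conv)
    fix N
    show "(\<lambda>\<omega>. A N \<omega> / B N \<omega>) \<in> borel_measurable M"
      by (rule borel_measurable_divide[OF Am Bm])
  qed
  moreover have "(\<lambda>N \<omega>. (\<lambda>x y. x / y) (A N \<omega>) (B N \<omega>)) =
      (\<lambda>N \<omega>. (1 / max (\<Sum>i=1..N. w i \<omega>) 1) * (\<Sum>i=1..N. w i \<omega> * (y i - YH w q y (i - 1) \<omega>)\<^sup>2))"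
  proof (intro ext)
    fix N \<omega>
    show "(\<lambda>x y. x / y) (A N \<omega>) (B N \<omega>) = (1 / max (\<Sum>i=1..N. w i \<omega>) 1) * (\<Sum>i=1..N. w i \<omega> * (y i - YH w q y (i - 1) \<omega>)\<^sup>2)"
    proof (cases "N = 0")
      case True then show ?thesis unfolding A_def B_def by simp
    next
      case False
      have "max (\<Sum>i=1..N. w i \<omega>) 1 > 0" by simp
      then show ?thesis unfolding A_def B_def using False by (simp add: field_simps)
    qed
  qed
  moreover have "(\<lambda>x y. x / y) (qs * sg) qs = sg" using qs by simp
  ultimately show ?thesis by simp
qed

end




lemma cip_cong:
  assumes "\<And>n \<omega>. \<omega> \<in> space M \<Longrightarrow> X n \<omega> = X' n \<omega>"
  shows "conv_in_prob M X c = conv_in_prob M X' c"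
proof -
  have "{\<omega> \<in> space M. e < \<bar>X n \<omega> - c\<bar>} = {\<omega> \<in> space M. e < \<bar>X' n \<omega> - c\<bar>}" for e n
    using assms by auto
  then show ?thesis unfolding conv_in_prob_def by simp
qed

context arm begin

lemma arm_meas:
  "(\<lambda>\<omega>. (1 / max (\<Sum>i=1..N. w i \<omega>) 1) * (\<Sum>i=1..N. w i \<omega> * (y i - YH w q y (i - 1) \<omega>)\<^sup>2)) \<in> borel_measurable M"
proof (rule borel_measurable_times)
  show "(\<lambda>\<omega>. 1 / max (\<Sum>i=1..N. w i \<omega>) 1) \<in> borel_measurable M"
    using sumw_meas[of N] by measurable
  show "(\<lambda>\<omega>. \<Sum>i=1..N. w i \<omega> * (y i - YH w q y (i - 1) \<omega>)\<^sup>2) \<in> borel_measurable M"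
  proof (rule borel_measurable_sum)
    fix i assume "i \<in> {1..N}"
    then have "w i \<in> borel_measurable M" using wm by auto
    then show "(\<lambda>\<omega>. w i \<omega> * (y i - YH w q y (i - 1) \<omega>)\<^sup>2) \<in> borel_measurable M"
      using YH_meas[of "i - 1"] by measurable
  qed
qed

end

lemma quad_nonneg:
  fixes Y0 Y1 :: "nat \<Rightarrow> real"
  shows "t\<^sup>2 * Svar Y0 N - 2 * t * Scov Y0 Y1 N + Svar Y1 N \<ge> 0"
proof -
  let ?u = "\<lambda>i. Y0 i - Ybar Y0 N" and ?v = "\<lambda>i. Y1 i - Ybar Y1 N"
  have "(\<Sum>i=1..N. (t * ?u i - ?v i)\<^sup>2) = (\<Sum>i=1..N. t\<^sup>2 * (?u i)\<^sup>2 - 2 * t * (?u i * ?v i) + (?v i)\<^sup>2)"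
    by (rule sum.cong[OF refl]) (simp add: power2_eq_square algebra_simps)
  also have "\<dots> = t\<^sup>2 * (\<Sum>i=1..N. (?u i)\<^sup>2) - 2 * t * (\<Sum>i=1..N. ?u i * ?v i) + (\<Sum>i=1..N. (?v i)\<^sup>2)"
    by (simp add: sum.distrib sum_subtractf sum_distrib_left)
  finally have eq: "(\<Sum>i=1..N. (t * ?u i - ?v i)\<^sup>2) = t\<^sup>2 * (\<Sum>i=1..N. (?u i)\<^sup>2) - 2 * t * (\<Sum>i=1..N. ?u i * ?v i) + (\<Sum>i=1..N. (?v i)\<^sup>2)" .
  have "0 \<le> (1 / real N) * (\<Sum>i=1..N. (t * ?u i - ?v i)\<^sup>2)" by (simp add: sum_nonneg)
  also have "\<dots> = t\<^sup>2 * Svar Y0 N - 2 * t * Scov Y0 Y1 N + Svar Y1 N"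
    unfolding eq Svar_def Scov_def by (simp add: algebra_simps)
  finally show ?thesis .
qed



theorem theorem5:
  fixes M :: "'a measure" and K p :: "nat \<Rightarrow> 'a \<Rightarrow> real"
    and Y0 Y1 :: "nat \<Rightarrow> real"
    and ps \<delta> Mb Y0lim Y1lim s0sq s1sq s01 :: real
  assumes "prob_space M"
    and design: "sequential_design M K Y0 Y1 p"
    and delta: "0 < \<delta>" "\<delta> < 1"
    and p_bounds: "\<And>i \<omega>. i \<ge> 1 \<Longrightarrow> \<omega> \<in> space M \<Longrightarrow> \<delta> \<le> p i \<omega> \<and> p i \<omega> \<le> 1 - \<delta>"
    and Y_bounded: "\<And>i. i \<ge> 1 \<Longrightarrow> \<bar>Y0 i\<bar> \<le> Mb \<and> \<bar>Y1 i\<bar> \<le> Mb"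
    and Y0_mean: "(\<lambda>N. Ybar Y0 N) \<longlonglongrightarrow> Y0lim"
    and Y1_mean: "(\<lambda>N. Ybar Y1 N) \<longlonglongrightarrow> Y1lim"
    and s0: "(\<lambda>N. Svar Y0 N) \<longlonglongrightarrow> s0sq"
    and s1: "(\<lambda>N. Svar Y1 N) \<longlonglongrightarrow> s1sq"
    and s01: "(\<lambda>N. Scov Y0 Y1 N) \<longlonglongrightarrow> s01"
    and s0_pos: "s0sq > 0" and s1_pos: "s1sq > 0"
    and ps: "0 < ps" "ps < 1"
    and strong_stable: "conv_in_prob M p ps"
  shows "conv_in_prob M (sigma0_hat_sq K p Y0 Y1) s0sq
       \<and> conv_in_prob M (sigma1_hat_sq K p Y0 Y1) s1sq
       \<and> conv_in_prob M (V_hat_strong ps K p Y0 Y1)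
           ((sqrt s0sq * sqrt (ps / (1 - ps)) + sqrt s1sq * sqrt ((1 - ps) / ps))\<^sup>2)
       \<and> (sqrt s0sq * sqrt (ps / (1 - ps)) + sqrt s1sq * sqrt ((1 - ps) / ps))\<^sup>2
           \<ge> s0sq * (ps / (1 - ps)) + s1sq * ((1 - ps) / ps) + 2 * s01
       \<and> ((\<forall>N\<ge>1. \<exists>c>0. \<forall>i\<in>{1..N}. Y1 i - Ybar Y1 N = c * (Y0 i - Ybar Y0 N))
           \<longrightarrow> conv_in_prob M (V_hat_strong ps K p Y0 Y1)
                 (s0sq * (ps / (1 - ps)) + s1sq * ((1 - ps) / ps) + 2 * s01))"
proof -
  note P = assms(1)
  interpret prob_space M by (rule P)
  have pb: "\<And>i \<omega>. i \<ge> 1 \<Longrightarrow> \<omega> \<in> space M \<Longrightarrow> 0 \<le> p i \<omega> \<and> p i \<omega> \<le> 1"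
    using p_bounds delta by force
  have K01: "\<And>i \<omega>. i \<ge> 1 \<Longrightarrow> \<omega> \<in> space M \<Longrightarrow> K i \<omega> = 0 \<or> K i \<omega> = 1"
    using design_K(2)[OF design] by blast
  have a0: "arm M K p (\<lambda>i \<omega>. 1 - K i \<omega>) (\<lambda>i \<omega>. 1 - p i \<omega>) Y0 Y1 Y0 (-1) Y0lim s0sq (1 - ps) \<delta> Mb"
    apply unfold_locales
    subgoal using assms(2) by simp
    subgoal using pb by blast
    subgoal by simp
    subgoal using K01 by force
    subgoal for i using design_K(1)[OF design, of i] by measurable
    subgoal for i using design_p(1)[OF design, of i] by measurable
    subgoal using p_bounds delta by force
    subgoal by (rule delta(1))
    subgoal using Y_bounded by blast
    subgoal by (rule Y0_mean)
    subgoal by (rule s0)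
    subgoal using strong_stable unfolding conv_in_prob_def by (simp add: abs_minus_commute)
    subgoal using ps by simp
    done
  have a1: "arm M K p K p Y0 Y1 Y1 1 Y1lim s1sq ps \<delta> Mb"
    apply unfold_locales
    subgoal using assms(2) by simp
    subgoal using pb by blast
    subgoal by simp
    subgoal using K01 by force
    subgoal for i using design_K(1)[OF design, of i] by simp
    subgoal for i using design_p(1)[OF design, of i] by simp
    subgoal using p_bounds delta by force
    subgoal by (rule delta(1))
    subgoal using Y_bounded by blast
    subgoal by (rule Y1_mean)
    subgoal by (rule s1)
    subgoal by (rule strong_stable)
    subgoal using ps by simp
    done
  define X0 where "X0 N \<omega> = (1 / max (\<Sum>i=1..N. 1 - K i \<omega>) 1) *
      (\<Sum>i=1..N. (1 - K i \<omega>) * (Y0 i - YH (\<lambda>i \<omega>. 1 - K i \<omega>) (\<lambda>i \<omega>. 1 - p i \<omega>) Y0 (i - 1) \<omega>)\<^sup>2)" for N \<omega>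
  define X1 where "X1 N \<omega> = (1 / max (\<Sum>i=1..N. K i \<omega>) 1) *
      (\<Sum>i=1..N. K i \<omega> * (Y1 i - YH K p Y1 (i - 1) \<omega>)\<^sup>2)" for N \<omega>
  have c0: "conv_in_prob M X0 s0sq" unfolding X0_def[abs_def] by (rule arm.arm_main[OF a0])
  have c1: "conv_in_prob M X1 s1sq" unfolding X1_def[abs_def] by (rule arm.arm_main[OF a1])
  have m0: "X0 N \<in> borel_measurable M" for N unfolding X0_def[abs_def] by (rule arm.arm_meas[OF a0])
  have m1: "X1 N \<in> borel_measurable M" for N unfolding X1_def[abs_def] by (rule arm.arm_meas[OF a1])
  have eq0: "sigma0_hat_sq K p Y0 Y1 N \<omega> = X0 N \<omega>" if w: "\<omega> \<in> space M" for N \<omega>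
  proof -
    have n0: "N0 K N \<omega> = (\<Sum>i=1..N. 1 - K i \<omega>)"
      unfolding N0_def N1_def by (simp add: sum_subtractf)
    have yh: "Yhat0 K p Y0 Y1 n \<omega> = YH (\<lambda>i \<omega>. 1 - K i \<omega>) (\<lambda>i \<omega>. 1 - p i \<omega>) Y0 n \<omega>" for n
    proof -
      have "(\<Sum>j=1..n. (1 - K j \<omega>) * Yobs K Y0 Y1 j \<omega> / (1 - p j \<omega>)) = (\<Sum>j=1..n. (1 - K j \<omega>) * Y0 j / (1 - p j \<omega>))"
      proof (rule sum.cong[OF refl])
        fix j assume "j \<in> {1..n}"
        then have j: "j \<ge> 1" by simp
        show "(1 - K j \<omega>) * Yobs K Y0 Y1 j \<omega> / (1 - p j \<omega>) = (1 - K j \<omega>) * Y0 j / (1 - p j \<omega>)"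
          using K01[OF j w] unfolding Yobs_def by auto
      qed
      then show ?thesis unfolding Yhat0_def YH_def by simp
    qed
    have t: "(\<Sum>i=1..N. (1 - K i \<omega>) * (Yobs K Y0 Y1 i \<omega> - Yhat0 K p Y0 Y1 (i - 1) \<omega>)\<^sup>2)
        = (\<Sum>i=1..N. (1 - K i \<omega>) * (Y0 i - YH (\<lambda>i \<omega>. 1 - K i \<omega>) (\<lambda>i \<omega>. 1 - p i \<omega>) Y0 (i - 1) \<omega>)\<^sup>2)"
    proof (rule sum.cong[OF refl])
      fix i assume "i \<in> {1..N}"
      then have i: "i \<ge> 1" by simp
      show "(1 - K i \<omega>) * (Yobs K Y0 Y1 i \<omega> - Yhat0 K p Y0 Y1 (i - 1) \<omega>)\<^sup>2
        = (1 - K i \<omega>) * (Y0 i - YH (\<lambda>i \<omega>. 1 - K i \<omega>) (\<lambda>i \<omega>. 1 - p i \<omega>) Y0 (i - 1) \<omega>)\<^sup>2"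
        using K01[OF i w] unfolding Yobs_def yh by auto
    qed
    show ?thesis unfolding sigma0_hat_sq_def X0_def n0 t ..
  qed
  have eq1: "sigma1_hat_sq K p Y0 Y1 N \<omega> = X1 N \<omega>" if w: "\<omega> \<in> space M" for N \<omega>
  proof -
    have yh: "Yhat1 K p Y0 Y1 n \<omega> = YH K p Y1 n \<omega>" for n
    proof -
      have "(\<Sum>j=1..n. K j \<omega> * Yobs K Y0 Y1 j \<omega> / p j \<omega>) = (\<Sum>j=1..n. K j \<omega> * Y1 j / p j \<omega>)"
      proof (rule sum.cong[OF refl])
        fix j assume "j \<in> {1..n}"
        then have j: "j \<ge> 1" by simp
        show "K j \<omega> * Yobs K Y0 Y1 j \<omega> / p j \<omega> = K j \<omega> * Y1 j / p j \<omega>"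
          using K01[OF j w] unfolding Yobs_def by auto
      qed
      then show ?thesis unfolding Yhat1_def YH_def by simp
    qed
    have t: "(\<Sum>i=1..N. K i \<omega> * (Yobs K Y0 Y1 i \<omega> - Yhat1 K p Y0 Y1 (i - 1) \<omega>)\<^sup>2)
        = (\<Sum>i=1..N. K i \<omega> * (Y1 i - YH K p Y1 (i - 1) \<omega>)\<^sup>2)"
    proof (rule sum.cong[OF refl])
      fix i assume "i \<in> {1..N}"
      then have i: "i \<ge> 1" by simp
      show "K i \<omega> * (Yobs K Y0 Y1 i \<omega> - Yhat1 K p Y0 Y1 (i - 1) \<omega>)\<^sup>2 = K i \<omega> * (Y1 i - YH K p Y1 (i - 1) \<omega>)\<^sup>2"
        using K01[OF i w] unfolding Yobs_def yh by auto
    qed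
    show ?thesis unfolding sigma1_hat_sq_def X1_def N1_def t ..
  qed
  have C1: "conv_in_prob M (sigma0_hat_sq K p Y0 Y1) s0sq"
    using c0 cip_cong[of M "sigma0_hat_sq K p Y0 Y1" X0] eq0 by blast
  have C2: "conv_in_prob M (sigma1_hat_sq K p Y0 Y1) s1sq"
    using c1 cip_cong[of M "sigma1_hat_sq K p Y0 Y1" X1] eq1 by blast
  define \<alpha> where "\<alpha> = sqrt (ps / (1 - ps))"
  define \<beta> where "\<beta> = sqrt ((1 - ps) / ps)"
  define g where "g x y = (sqrt x * \<alpha> + sqrt y * \<beta>)\<^sup>2" for x y
  have cont: "isCont (\<lambda>z. g (fst z) (snd z)) (s0sq, s1sq)"
    unfolding g_def by (intro continuous_intros)
  have "conv_in_prob M (\<lambda>N \<omega>. g (X0 N \<omega>) (X1 N \<omega>)) (g s0sq s1sq)"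
  proof (rule cip_cont2[OF P c0 c1 m0 m1 cont])
    fix N show "(\<lambda>\<omega>. g (X0 N \<omega>) (X1 N \<omega>)) \<in> borel_measurable M"
      unfolding g_def using m0[of N] m1[of N] by measurable
  qed
  moreover have "V_hat_strong ps K p Y0 Y1 N \<omega> = g (X0 N \<omega>) (X1 N \<omega>)" if "\<omega> \<in> space M" for N \<omega>
    unfolding V_hat_strong_def g_def \<alpha>_def \<beta>_def using eq0[OF that] eq1[OF that] by simp
  ultimately have C3: "conv_in_prob M (V_hat_strong ps K p Y0 Y1) (g s0sq s1sq)"
    using cip_cong[of M "V_hat_strong ps K p Y0 Y1" "\<lambda>N \<omega>. g (X0 N \<omega>) (X1 N \<omega>)"] by blast
  have ab: "\<alpha> * \<beta> = 1" unfolding \<alpha>_def \<beta>_def using ps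
    by (simp add: real_sqrt_mult[symmetric])
  have a2: "\<alpha>\<^sup>2 = ps / (1 - ps)" unfolding \<alpha>_def using ps by simp
  have b2: "\<beta>\<^sup>2 = (1 - ps) / ps" unfolding \<beta>_def using ps by simp
  have gval: "g s0sq s1sq = s0sq * (ps / (1 - ps)) + s1sq * ((1 - ps) / ps) + 2 * (sqrt s0sq * sqrt s1sq)"
  proof -
    have "g s0sq s1sq = (sqrt s0sq)\<^sup>2 * \<alpha>\<^sup>2 + (sqrt s1sq)\<^sup>2 * \<beta>\<^sup>2 + 2 * (sqrt s0sq * sqrt s1sq) * (\<alpha> * \<beta>)"
      unfolding g_def by (simp add: power2_eq_square algebra_simps)
    then show ?thesis unfolding ab a2 b2 using s0_pos s1_pos by simp
  qed
  have cs: "s01 \<le> sqrt s0sq * sqrt s1sq"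
  proof -
    define t where "t = sqrt s1sq / sqrt s0sq"
    have t0: "t > 0" unfolding t_def using s0_pos s1_pos by simp
    have "(\<lambda>N. t\<^sup>2 * Svar Y0 N - 2 * t * Scov Y0 Y1 N + Svar Y1 N) \<longlonglongrightarrow> t\<^sup>2 * s0sq - 2 * t * s01 + s1sq"
      by (intro tendsto_intros s0 s1 s01)
    then have "t\<^sup>2 * s0sq - 2 * t * s01 + s1sq \<ge> 0"
      by (rule LIMSEQ_le_const) (use quad_nonneg in auto)
    moreover have "t\<^sup>2 * s0sq = s1sq" unfolding t_def using s0_pos s1_pos
      by (simp add: power_divide)
    ultimately have "t * s01 \<le> s1sq" by simp
    then have "s01 \<le> s1sq / t" using t0 by (simp add: field_simps)
    also have "s1sq / t = sqrt s0sq * sqrt s1sq" unfolding t_def using s0_pos s1_pos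
      by (simp add: field_simps)
    finally show ?thesis .
  qed
  have C4: "(sqrt s0sq * sqrt (ps / (1 - ps)) + sqrt s1sq * sqrt ((1 - ps) / ps))\<^sup>2
           \<ge> s0sq * (ps / (1 - ps)) + s1sq * ((1 - ps) / ps) + 2 * s01"
    using gval cs unfolding g_def \<alpha>_def \<beta>_def by simp
  have C5: "conv_in_prob M (V_hat_strong ps K p Y0 Y1)
                 (s0sq * (ps / (1 - ps)) + s1sq * ((1 - ps) / ps) + 2 * s01)"
    if hom: "\<forall>N\<ge>1. \<exists>c>0. \<forall>i\<in>{1..N}. Y1 i - Ybar Y1 N = c * (Y0 i - Ybar Y0 N)"
  proof -
    have eqN: "Scov Y0 Y1 N = sqrt (Svar Y0 N * Svar Y1 N)" if N: "N \<ge> 1" for N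
    proof -
      obtain c where c: "c > 0" and hc: "\<forall>i\<in>{1..N}. Y1 i - Ybar Y1 N = c * (Y0 i - Ybar Y0 N)"
        using hom N by blast
      have s1: "(\<Sum>i=1..N. (Y1 i - Ybar Y1 N)\<^sup>2) = (\<Sum>i=1..N. c\<^sup>2 * (Y0 i - Ybar Y0 N)\<^sup>2)"
        by (rule sum.cong[OF refl]) (use hc in \<open>simp add: power_mult_distrib\<close>)
      have v1: "Svar Y1 N = c\<^sup>2 * Svar Y0 N"
        unfolding Svar_def s1 sum_distrib_left[symmetric] by (simp add: mult.left_commute)
      have s2: "(\<Sum>i=1..N. (Y0 i - Ybar Y0 N) * (Y1 i - Ybar Y1 N)) = (\<Sum>i=1..N. c * (Y0 i - Ybar Y0 N)\<^sup>2)"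
        by (rule sum.cong[OF refl]) (use hc in \<open>simp add: power2_eq_square\<close>)
      have cv: "Scov Y0 Y1 N = c * Svar Y0 N"
        unfolding Scov_def Svar_def s2 sum_distrib_left[symmetric] by (simp add: mult.left_commute)
      have sv0: "Svar Y0 N \<ge> 0" unfolding Svar_def by (simp add: sum_nonneg)
      have "sqrt (Svar Y0 N * Svar Y1 N) = sqrt ((c * Svar Y0 N)\<^sup>2)"
        unfolding v1 by (simp add: power2_eq_square algebra_simps)
      also have "\<dots> = c * Svar Y0 N" using c sv0 by simp
      finally show ?thesis using cv by simp
    qed
    have "(\<lambda>N. sqrt (Svar Y0 N * Svar Y1 N)) \<longlonglongrightarrow> sqrt (s0sq * s1sq)"
      by (intro tendsto_intros s0 s1)
    then have "(\<lambda>N. Scov Y0 Y1 N) \<longlonglongrightarrow> sqrt (s0sq * s1sq)"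
      by (rule Lim_transform_eventually) (use eqN in \<open>auto intro!: eventually_sequentiallyI[of 1]\<close>)
    then have "s01 = sqrt (s0sq * s1sq)" using s01 LIMSEQ_unique by blast
    then have "s0sq * (ps / (1 - ps)) + s1sq * ((1 - ps) / ps) + 2 * s01 = g s0sq s1sq"
      using gval by (simp add: real_sqrt_mult)
    then show ?thesis using C3 by simp
  qed
  show ?thesis
    using C1 C2 C3 C4 C5 unfolding g_def \<alpha>_def \<beta>_def by blast
qed

end
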